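(* It holds that $\sqrt{n}(\overline{\boldsymbol\psi}_n-\boldsymbol\psi_0)=O_P(1)$, $\sqrt{n}(\widetilde{\boldsymbol\psi}_n-\boldsymbol\psi_0)=O_P(1)$, and $\sqrt{n}(\check{\boldsymbol\psi}_n-\boldsymbol\psi_0)=O_P(1)$.
   Context: Let $\mathcal{E}$ be a minimally represented regular exponential family with canonical parameter $\boldsymbol\theta\in\Theta$, mean parameter $\boldsymbol\mu\in M$, sufficient statistic split as $\boldsymbol t=(\boldsymbol u,\boldsymbol v)$, and mixed parametrization $\boldsymbol\psi=(\boldsymbol\mu_u,\boldsymbol\theta_v)\in M_u\times\Theta_v$. Let $\mathcal{E}'$ be the mixed convex subfamily with mixed parameters in $M_u'\times\Theta_v'$, $M_u'$, $\Theta_v'$ convex and relatively closed, and let the data be an i.i.d. sample of size $n$ from the distribution with mixed parameter $\boldsymbol\psi_0\in M_u'\times\Theta_v'$, with average sufficient statistic $\boldsymbol t_n=(\boldsymbol u_n,\boldsymbol v_n)$. Define: $\overline{\boldsymbol\psi}_n=(\boldsymbol u_n,\theta_v(\boldsymbol t_n))$, the unrestricted MLE in mixed parametrization; $\widetilde{\boldsymbol\psi}_n$, the MLE over $\mathcal{E}'$; and $\check{\boldsymbol\psi}_n$, the mixed dual estimator, obtained by first minimizing the Kullback–Leibler divergence $\boldsymbol K(\boldsymbol t_n,\boldsymbol\theta)=-\langle\boldsymbol t_n,\boldsymbol\theta\rangle+A^*(\boldsymbol t_n)+A(\boldsymbol\theta)$ over $\boldsymbol\theta$ with $\boldsymbol\theta_v\in\Theta_v'$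 (giving $\widehat{\boldsymbol\theta}_n$), then minimizing $\boldsymbol K(\boldsymbol\mu,\widehat{\boldsymbol\theta}_n)$ over $\boldsymbol\mu\in M$ with $\boldsymbol\mu_u\in M_u'$, expressed in mixed parametrization. $O_P(1)$ means bounded in probability. *)

theory Defs
  imports "HOL-Probability.Probability"
begin

text \<open>Regular exponential family with base measure nu on type 'x and sufficient
statistic t, split as t = (u, v) with u in 'a and v in 'b.\<close>

definition ef_laplace :: "'x measure \<Rightarrow> ('x \<Rightarrow> ('a::euclidean_space \<times> 'b::euclidean_space))
    \<Rightarrow> 'a \<times> 'b \<Rightarrow> ennreal" where
  "ef_laplace \<nu> t \<theta> = (\<integral>\<^sup>+ x. ennreal (exp (t x \<bullet> \<theta>)) \<partial>\<nu>)"

definition nat_param_space :: "'x measure \<Rightarrow> ('x \<Rightarrow> ('a::euclidean_space \<times> 'b::euclidean_space))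
    \<Rightarrow> ('a \<times> 'b) set" where
  "nat_param_space \<nu> t = {\<theta>. ef_laplace \<nu> t \<theta> < \<infinity>}"

definition log_partition :: "'x measure \<Rightarrow> ('x \<Rightarrow> ('a::euclidean_space \<times> 'b::euclidean_space))
    \<Rightarrow> 'a \<times> 'b \<Rightarrow> ereal" where
  "log_partition \<nu> t \<theta> =
     (if \<theta> \<in> nat_param_space \<nu> t then ereal (ln (enn2real (ef_laplace \<nu> t \<theta>))) else \<infinity>)"

definition ef_density :: "'x measure \<Rightarrow> ('x \<Rightarrow> ('a::euclidean_space \<times> 'b::euclidean_space))
    \<Rightarrow> 'a \<times> 'b \<Rightarrow> 'x \<Rightarrow> real" where
  "ef_density \<nu> t \<theta> x = exp (t x \<bullet> \<theta> - real_of_ereal (log_partition \<nu> t \<theta>))"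

definition ef_distr :: "'x measure \<Rightarrow> ('x \<Rightarrow> ('a::euclidean_space \<times> 'b::euclidean_space))
    \<Rightarrow> 'a \<times> 'b \<Rightarrow> 'x measure" where
  "ef_distr \<nu> t \<theta> = density \<nu> (\<lambda>x. ennreal (ef_density \<nu> t \<theta> x))"

definition mean_param :: "'x measure \<Rightarrow> ('x \<Rightarrow> ('a::euclidean_space \<times> 'b::euclidean_space))
    \<Rightarrow> 'a \<times> 'b \<Rightarrow> 'a \<times> 'b" where
  "mean_param \<nu> t \<theta> = (\<integral>x. ef_density \<nu> t \<theta> x *\<^sub>R t x \<partial>\<nu>)"

definition mean_space :: "'x measure \<Rightarrow> ('x \<Rightarrow> ('a::euclidean_space \<times> 'b::euclidean_space))
    \<Rightarrow> ('a \<times> 'b) set" where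
  "mean_space \<nu> t = mean_param \<nu> t ` nat_param_space \<nu> t"

definition canon_of_mean :: "'x measure \<Rightarrow> ('x \<Rightarrow> ('a::euclidean_space \<times> 'b::euclidean_space))
    \<Rightarrow> 'a \<times> 'b \<Rightarrow> 'a \<times> 'b" where
  "canon_of_mean \<nu> t \<mu> = (THE \<theta>. \<theta> \<in> nat_param_space \<nu> t \<and> mean_param \<nu> t \<theta> = \<mu>)"

definition mixed_param :: "'x measure \<Rightarrow> ('x \<Rightarrow> ('a::euclidean_space \<times> 'b::euclidean_space))
    \<Rightarrow> 'a \<times> 'b \<Rightarrow> 'a \<times> 'b" where
  "mixed_param \<nu> t \<theta> = (fst (mean_param \<nu> t \<theta>), snd \<theta>)"

definition conj_A :: "'x measure \<Rightarrow> ('x \<Rightarrow> ('a::euclidean_space \<times> 'b::euclidean_space))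
    \<Rightarrow> 'a \<times> 'b \<Rightarrow> ereal" where
  "conj_A \<nu> t \<mu> = (SUP \<theta>. ereal (\<mu> \<bullet> \<theta>) - log_partition \<nu> t \<theta>)"

definition KL_div :: "'x measure \<Rightarrow> ('x \<Rightarrow> ('a::euclidean_space \<times> 'b::euclidean_space))
    \<Rightarrow> 'a \<times> 'b \<Rightarrow> 'a \<times> 'b \<Rightarrow> ereal" where
  "KL_div \<nu> t \<mu> \<theta> = - ereal (\<mu> \<bullet> \<theta>) + conj_A \<nu> t \<mu> + log_partition \<nu> t \<theta>"

definition minimal_rep :: "'x measure \<Rightarrow> ('x \<Rightarrow> ('a::euclidean_space \<times> 'b::euclidean_space)) \<Rightarrow> bool" where
  "minimal_rep \<nu> t \<longleftrightarrow> (\<forall>a c. (AE x in \<nu>. t x \<bullet> a = c) \<longrightarrow> a = 0)"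

definition regular_ef :: "'x measure \<Rightarrow> ('x \<Rightarrow> ('a::euclidean_space \<times> 'b::euclidean_space)) \<Rightarrow> bool" where
  "regular_ef \<nu> t \<longleftrightarrow> open (nat_param_space \<nu> t) \<and> nat_param_space \<nu> t \<noteq> {}"

definition avg_stat :: "('x \<Rightarrow> ('a::euclidean_space \<times> 'b::euclidean_space)) \<Rightarrow> (nat \<Rightarrow> 'w \<Rightarrow> 'x)
    \<Rightarrow> nat \<Rightarrow> 'w \<Rightarrow> 'a \<times> 'b" where
  "avg_stat t X n \<omega> = (1 / real n) *\<^sub>R (\<Sum>i<n. t (X i \<omega>))"

definition likelihood :: "'x measure \<Rightarrow> ('x \<Rightarrow> ('a::euclidean_space \<times> 'b::euclidean_space))
    \<Rightarrow> (nat \<Rightarrow> 'w \<Rightarrow> 'x) \<Rightarrow> nat \<Rightarrow> 'w \<Rightarrow> 'a \<times> 'b \<Rightarrow> real" where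
  "likelihood \<nu> t X n \<omega> \<theta> = (\<Prod>i<n. ef_density \<nu> t \<theta> (X i \<omega>))"

text \<open>Bounded in (outer) probability, O_P(1).\<close>
definition bounded_in_prob :: "'w measure \<Rightarrow> (nat \<Rightarrow> 'w \<Rightarrow> 'c::real_normed_vector) \<Rightarrow> bool" where
  "bounded_in_prob P Y \<longleftrightarrow>
     (\<forall>\<epsilon>>0. \<exists>C N. \<forall>n\<ge>N. \<exists>E\<in>sets P.
        {\<omega>\<in>space P. norm (Y n \<omega>) > C} \<subseteq> E \<and> measure P E < \<epsilon>)"

end

theory Submission
  imports Defs
begin
lemma exp_low: fixes z :: real shows "1 + z + min (z^2) 1 / 20 \<le> exp z"
proof -
  obtain \<xi> where xi: "\<bar>\<xi>\<bar> \<le> \<bar>z\<bar>" "exp z = (\<Sum>m<2. (z ^ m) / fact m) + (exp \<xi> / fact 2) * z ^ 2"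
    using Maclaurin_exp_le[of z 2] by blast
  have e: "exp z = 1 + z + exp \<xi> / 2 * z^2" using xi(2) by (simp add: numeral_2_eq_2)
  have e1: "exp (-1) \<ge> (1/3::real)"
    using exp_le by (simp add: exp_minus field_simps)
  have e2: "exp (-2) \<ge> (1/9::real)"
  proof -
    have "exp (-2) = exp (-1) * exp (-1::real)" by (simp flip: exp_add)
    moreover have "exp (-1) * exp (-1) \<ge> (1/3) * (1/3::real)" using e1 by (intro mult_mono) auto
    ultimately show ?thesis by simp
  qed
  consider "z \<ge> 0" | "-1 \<le> z \<and> z < 0" | "-2 \<le> z \<and> z < -1" | "z < -2" by linarith
  then show ?thesis
  proof cases
    case 1
    have "min (z^2) 1 \<le> z^2" "0 \<le> z^2" by simp_all
    then show ?thesis using exp_lower_Taylor_quadratic[of z] 1 by linarith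
  next
    case 2
    then have "\<xi> \<ge> -1" using xi(1) by auto
    then have "exp (-1) \<le> exp \<xi>" by simp
    then have "exp \<xi> \<ge> 1/3" using e1 by linarith
    then have "exp \<xi> / 2 * z^2 \<ge> 1/6 * z^2" by (intro mult_right_mono) auto
    moreover have "min (z^2) 1 / 20 \<le> 1/6 * z^2" by (simp add: min_def)
    ultimately show ?thesis using e by linarith
  next
    case 3
    then have "\<xi> \<ge> -2" using xi(1) by auto
    then have "exp (-2) \<le> exp \<xi>" by simp
    then have "exp \<xi> \<ge> 1/9" using e2 by linarith
    moreover have "(-z)^2 \<ge> 1" using 3 by (intro one_le_power) linarith
    then have "z^2 \<ge> 1" by simp
    ultimately have "exp \<xi> / 2 * z^2 \<ge> 1/18 * 1" by (intro mult_mono) auto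
    moreover have "min (z^2) 1 / 20 \<le> 1/20" by (simp add: min_def)
    ultimately show ?thesis using e by linarith
  next
    case 4
    have "min (z^2) 1 / 20 \<le> 1/20" by (simp add: min_def)
    then show ?thesis using 4 exp_gt_zero[of z] by linarith
  qed
qed

lemma exp_up: fixes y :: real shows "exp y - 1 - y \<le> y^2 * exp \<bar>y\<bar> / 2"
proof -
  obtain \<xi> where xi: "\<bar>\<xi>\<bar> \<le> \<bar>y\<bar>" "exp y = (\<Sum>m<2. (y ^ m) / fact m) + (exp \<xi> / fact 2) * y ^ 2"
    using Maclaurin_exp_le[of y 2] by blast
  have e: "exp y = 1 + y + exp \<xi> / 2 * y^2" using xi(2) by (simp add: numeral_2_eq_2)
  have "exp \<xi> \<le> exp \<bar>y\<bar>" using xi(1) by simp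
  then have "exp \<xi> / 2 * y^2 \<le> exp \<bar>y\<bar> / 2 * y^2" by (intro mult_right_mono) auto
  also have "exp \<bar>y\<bar> / 2 * y^2 = y^2 * exp \<bar>y\<bar> / 2" by simp
  finally show ?thesis using e by linarith
qed

lemma exp_diff_le: fixes x y :: real shows "\<bar>exp x - exp y\<bar> \<le> \<bar>x - y\<bar> * exp (max x y)"
proof -
  have *: "exp b - exp a \<le> (b - a) * exp b" if "a \<le> b" for a b :: real
  proof -
    have "1 + (a - b) \<le> exp (a - b)" by (rule exp_ge_add_one_self)
    then have "exp b * (1 + (a - b)) \<le> exp b * exp (a - b)" by (intro mult_left_mono) auto
    also have "exp b * exp (a - b) = exp a" by (simp flip: exp_add)
    finally show ?thesis by (simp add: algebra_simps)
  qed
  show ?thesis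
  proof (cases "x \<le> y")
    case True
    then show ?thesis using *[of x y] exp_le_cancel_iff[of x y] by (simp add: max_def abs_if)
  next
    case False
    then show ?thesis using *[of y x] exp_le_cancel_iff[of y x] by (simp add: max_def abs_if)
  qed
qed

lemma min_sq_lip: fixes u v :: real shows "\<bar>min (u^2) 1 - min (v^2) 1\<bar> \<le> 2 * \<bar>u - v\<bar>"
proof -
  have eq: "min (w^2) 1 = (min \<bar>w\<bar> 1)^2" for w :: real
    by (cases "\<bar>w\<bar> \<le> 1") (auto simp: min_def abs_square_le_1 power2_abs abs_square_less_1 not_le)
  define a where "a = min \<bar>u\<bar> 1" define b where "b = min \<bar>v\<bar> 1"
  have ab: "0 \<le> a" "a \<le> 1" "0 \<le> b" "b \<le> 1" "\<bar>a - b\<bar> \<le> \<bar>u - v\<bar>" unfolding a_def b_def by auto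
  have "a^2 - b^2 = (a - b) * (a + b)" by (simp add: power2_eq_square algebra_simps)
  then have "\<bar>a^2 - b^2\<bar> = \<bar>a - b\<bar> * (a + b)" using ab by (simp add: abs_mult)
  also have "\<dots> \<le> \<bar>u - v\<bar> * 2" using ab by (intro mult_mono) auto
  finally show ?thesis unfolding eq a_def[symmetric] b_def[symmetric] by simp
qed

lemma lin_le_exp: fixes a y :: real assumes "a > 0" "y \<ge> 0" shows "y \<le> exp (a * y) / a"
proof -
  have "a * y \<le> exp (a * y)" using exp_ge_add_one_self[of "a*y"] by linarith
  then show ?thesis using assms by (simp add: field_simps)
qed

lemma sq_le_exp: fixes a y :: real assumes "a > 0" "y \<ge> 0" shows "y^2 \<le> 4 / a^2 * exp (a * y)"
proof -
  have "a * y / 2 \<le> exp (a * y / 2)" using exp_ge_add_one_self[of "a*y/2"] by linarith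
  then have "(a * y / 2)^2 \<le> (exp (a * y / 2))^2" using assms by (intro power_mono) auto
  also have "(exp (a * y / 2))^2 = exp (a * y)" by (simp add: power2_eq_square flip: exp_add)
  finally show ?thesis using assms by (simp add: field_simps power2_eq_square)
qed

lemma exp_norm_dom:
  fixes v \<theta> :: "'v::euclidean_space" assumes "R > 0"
  shows "exp (v \<bullet> \<theta> + (R / DIM('v)) * norm v) \<le> (\<Sum>b\<in>Basis. exp (v \<bullet> (\<theta> + R *\<^sub>R b)) + exp (v \<bullet> (\<theta> - R *\<^sub>R b)))"
proof -
  define m where "m = Max ((\<lambda>b. \<bar>v \<bullet> b\<bar>) ` Basis)"
  have "m \<in> (\<lambda>b. \<bar>v \<bullet> b\<bar>) ` Basis" unfolding m_def by (intro Max_in) auto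
  then obtain b where b: "b \<in> Basis" "m = \<bar>v \<bullet> b\<bar>" by auto
  have mx: "\<bar>v \<bullet> b'\<bar> \<le> m" if "b' \<in> Basis" for b' unfolding m_def using that by (intro Max_ge) auto
  have "norm v \<le> (\<Sum>b\<in>Basis. \<bar>v \<bullet> b\<bar>)" by (rule norm_le_l1)
  also have "\<dots> \<le> of_nat (card (Basis::'v set)) * m" by (rule sum_bounded_above) (use mx in auto)
  finally have "(R / DIM('v)) * norm v \<le> (R / DIM('v)) * (DIM('v) * m)"
    using assms by (intro mult_left_mono) auto
  also have "\<dots> = R * \<bar>v \<bullet> b\<bar>" using b by simp
  finally have le: "(R / DIM('v)) * norm v \<le> R * \<bar>v \<bullet> b\<bar>" .
  have "exp (v \<bullet> \<theta> + (R / DIM('v)) * norm v) \<le> exp (v \<bullet> \<theta> + R * \<bar>v \<bullet> b\<bar>)"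
    using le by simp
  also have "\<dots> \<le> exp (v \<bullet> (\<theta> + R *\<^sub>R b)) + exp (v \<bullet> (\<theta> - R *\<^sub>R b))"
    by (cases "v \<bullet> b \<ge> 0") (auto simp: inner_add_right inner_diff_right abs_if add_increasing2 add_increasing)
  also have "\<dots> \<le> (\<Sum>b\<in>Basis. exp (v \<bullet> (\<theta> + R *\<^sub>R b)) + exp (v \<bullet> (\<theta> - R *\<^sub>R b)))"
    using b by (intro member_le_sum) (auto intro: add_nonneg_nonneg)
  finally show ?thesis .
qed

lemma exp_eq_one_plus: fixes z :: real assumes "exp z \<le> 1 + z" shows "z = 0"
proof (rule ccontr)
  assume "z \<noteq> 0"
  then have "min (z^2) 1 > 0" by simp
  then show False using exp_low[of z] assms by linarith
qed

locale ef =
  fixes \<nu> :: "'x measure" and t :: "'x \<Rightarrow> ('a::euclidean_space \<times> 'b::euclidean_space)"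
  assumes t_meas[measurable]: "t \<in> borel_measurable \<nu>"
    and minimal: "minimal_rep \<nu> t"
    and regular: "regular_ef \<nu> t"
begin

abbreviation "Th \<equiv> nat_param_space \<nu> t"
definition Z where "Z \<theta> = (\<integral>x. exp (t x \<bullet> \<theta>) \<partial>\<nu>)"
definition A where "A \<theta> = ln (Z \<theta>)"
definition N where "N \<theta> = (\<integral>x. exp (t x \<bullet> \<theta>) *\<^sub>R t x \<partial>\<nu>)"
abbreviation "mu \<equiv> mean_param \<nu> t"

lemma open_Th: "open Th" using regular unfolding regular_ef_def by auto

lemma Th_iff: "\<theta> \<in> Th \<longleftrightarrow> integrable \<nu> (\<lambda>x. exp (t x \<bullet> \<theta>))"
  unfolding nat_param_space_def ef_laplace_def by (simp add: integrable_iff_bounded)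

lemma nu_nonnull: "emeasure \<nu> (space \<nu>) \<noteq> 0"
proof
  assume h: "emeasure \<nu> (space \<nu>) = 0"
  obtain b :: "'a\<times>'b" where b: "b \<in> Basis" using nonempty_Basis by blast
  have "AE x in \<nu>. t x \<bullet> b = 0" using h by (intro AE_I[of _ _ "space \<nu>"]) auto
  then have "b = 0" using minimal unfolding minimal_rep_def by blast
  with b show False by (simp add: nonzero_Basis)
qed

lemma integral_pos:
  fixes f :: "'x \<Rightarrow> real"
  assumes "integrable \<nu> f" "\<And>x. x \<in> space \<nu> \<Longrightarrow> 0 < f x"
  shows "0 < integral\<^sup>L \<nu> f"
proof -
  have ge: "0 \<le> integral\<^sup>L \<nu> f" using assms by (intro integral_nonneg_AE) (auto intro: less_imp_le)
  have "integral\<^sup>L \<nu> f \<noteq> 0"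
  proof
    assume "integral\<^sup>L \<nu> f = 0"
    then have "AE x in \<nu>. f x = 0" using assms by (subst (asm) integral_nonneg_eq_0_iff_AE) (auto intro: less_imp_le)
    then have "AE x in \<nu>. False" using AE_space by eventually_elim (use assms in force)
    then have "ae_filter \<nu> = bot" by (simp add: eventually_False)
    then show False using nu_nonnull ae_filter_eq_bot_iff by blast
  qed
  with ge show ?thesis by simp
qed

lemma Z_pos: "\<theta> \<in> Th \<Longrightarrow> 0 < Z \<theta>"
  unfolding Z_def by (intro integral_pos) (auto simp: Th_iff)

lemma laplace_eq: "\<theta> \<in> Th \<Longrightarrow> ef_laplace \<nu> t \<theta> = ennreal (Z \<theta>)"
  unfolding ef_laplace_def Z_def by (intro nn_integral_eq_integral) (auto simp: Th_iff)

lemma lp_eq: "\<theta> \<in> Th \<Longrightarrow> log_partition \<nu> t \<theta> = ereal (A \<theta>)"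
  unfolding log_partition_def A_def using laplace_eq Z_pos by (simp add: less_imp_le)

lemma lp_out: "\<theta> \<notin> Th \<Longrightarrow> log_partition \<nu> t \<theta> = \<infinity>"
  unfolding log_partition_def by simp

lemma dens_eq: "\<theta> \<in> Th \<Longrightarrow> ef_density \<nu> t \<theta> x = exp (t x \<bullet> \<theta>) / Z \<theta>"
  unfolding ef_density_def using lp_eq Z_pos by (simp add: A_def exp_diff)

lemma mu_eq: "\<theta> \<in> Th \<Longrightarrow> mu \<theta> = (1 / Z \<theta>) *\<^sub>R N \<theta>"
proof -
  assume th: "\<theta> \<in> Th"
  have "mu \<theta> = (\<integral>x. (1 / Z \<theta>) *\<^sub>R (exp (t x \<bullet> \<theta>) *\<^sub>R t x) \<partial>\<nu>)"
    unfolding mean_param_def using th by (simp add: dens_eq)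
  also have "\<dots> = (1 / Z \<theta>) *\<^sub>R N \<theta>" unfolding N_def by (rule integral_scaleR_right)
  finally show ?thesis .
qed

lemma N_eq: "\<theta> \<in> Th \<Longrightarrow> N \<theta> = Z \<theta> *\<^sub>R mu \<theta>"
  using mu_eq Z_pos by (simp add: less_imp_neq[symmetric])

lemma dom: assumes "\<theta> \<in> Th" shows "\<exists>a>0. integrable \<nu> (\<lambda>x. exp (t x \<bullet> \<theta> + a * norm (t x)))"
proof -
  obtain R where R: "R > 0" "cball \<theta> R \<subseteq> Th" using open_Th assms open_contains_cball by blast
  define a where "a = R / DIM('a\<times>'b)"
  have a: "a > 0" unfolding a_def using R by (intro divide_pos_pos) (auto simp: add_pos_pos)
  have "integrable \<nu> (\<lambda>x. (\<Sum>b\<in>Basis. exp (t x \<bullet> (\<theta> + R *\<^sub>R b)) + exp (t x \<bullet> (\<theta> - R *\<^sub>R b))))"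
  proof (rule Bochner_Integration.integrable_sum)
    fix b :: "'a\<times>'b" assume b: "b \<in> Basis"
    have "\<theta> + R *\<^sub>R b \<in> cball \<theta> R" "\<theta> - R *\<^sub>R b \<in> cball \<theta> R" using b R by (auto simp: dist_norm)
    then have "\<theta> + R *\<^sub>R b \<in> Th" "\<theta> - R *\<^sub>R b \<in> Th" using subsetD[OF R(2)] by blast+
    then have "integrable \<nu> (\<lambda>x. exp (t x \<bullet> (\<theta> + R *\<^sub>R b)))" "integrable \<nu> (\<lambda>x. exp (t x \<bullet> (\<theta> - R *\<^sub>R b)))"
      unfolding Th_iff by blast+
    then show "integrable \<nu> (\<lambda>x. exp (t x \<bullet> (\<theta> + R *\<^sub>R b)) + exp (t x \<bullet> (\<theta> - R *\<^sub>R b)))"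
      by (rule Bochner_Integration.integrable_add)
  qed
  then have "integrable \<nu> (\<lambda>x. exp (t x \<bullet> \<theta> + a * norm (t x)))"
  proof (rule Bochner_Integration.integrable_bound)
    show "AE x in \<nu>. norm (exp (t x \<bullet> \<theta> + a * norm (t x))) \<le> norm (\<Sum>b\<in>Basis. exp (t x \<bullet> (\<theta> + R *\<^sub>R b)) + exp (t x \<bullet> (\<theta> - R *\<^sub>R b)))"
    proof (intro AE_I2)
      fix x
      have "0 \<le> (\<Sum>b\<in>Basis. exp (t x \<bullet> (\<theta> + R *\<^sub>R b)) + exp (t x \<bullet> (\<theta> - R *\<^sub>R b)))"
        by (intro sum_nonneg add_nonneg_nonneg) auto
      moreover have "exp (t x \<bullet> \<theta> + a * norm (t x)) \<le> (\<Sum>b\<in>Basis. exp (t x \<bullet> (\<theta> + R *\<^sub>R b)) + exp (t x \<bullet> (\<theta> - R *\<^sub>R b)))"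
        using exp_norm_dom[OF R(1), of "t x" \<theta>, folded a_def] .
      ultimately show "norm (exp (t x \<bullet> \<theta> + a * norm (t x))) \<le> norm (\<Sum>b\<in>Basis. exp (t x \<bullet> (\<theta> + R *\<^sub>R b)) + exp (t x \<bullet> (\<theta> - R *\<^sub>R b)))"
        by simp
    qed
  qed simp
  with a show ?thesis by blast
qed

lemma int_exp_mom:
  assumes a: "a > 0" and int: "integrable \<nu> (\<lambda>x. exp (t x \<bullet> \<theta> + a * norm (t x)))"
  shows "integrable \<nu> (\<lambda>x. exp (t x \<bullet> \<theta>) * norm (t x))"
    and "integrable \<nu> (\<lambda>x. exp (t x \<bullet> \<theta>) * (norm (t x))^2)"
proof -
  show "integrable \<nu> (\<lambda>x. exp (t x \<bullet> \<theta>) * norm (t x))"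
  proof (rule Bochner_Integration.integrable_bound[OF integrable_mult_right[OF int, of "1/a"]])
    show "AE x in \<nu>. norm (exp (t x \<bullet> \<theta>) * norm (t x)) \<le> norm (1 / a * exp (t x \<bullet> \<theta> + a * norm (t x)))"
    proof (intro AE_I2)
      fix x
      have "norm (t x) \<le> exp (a * norm (t x)) / a" by (rule lin_le_exp) (use a in auto)
      then have "exp (t x \<bullet> \<theta>) * norm (t x) \<le> exp (t x \<bullet> \<theta>) * (exp (a * norm (t x)) / a)"
        by (intro mult_left_mono) auto
      then show "norm (exp (t x \<bullet> \<theta>) * norm (t x)) \<le> norm (1 / a * exp (t x \<bullet> \<theta> + a * norm (t x)))"
        using a by (simp add: exp_add field_simps)
    qed
  qed simp
  show "integrable \<nu> (\<lambda>x. exp (t x \<bullet> \<theta>) * (norm (t x))^2)"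
  proof (rule Bochner_Integration.integrable_bound[OF integrable_mult_right[OF int, of "4/a^2"]])
    show "AE x in \<nu>. norm (exp (t x \<bullet> \<theta>) * (norm (t x))^2) \<le> norm (4/a^2 * exp (t x \<bullet> \<theta> + a * norm (t x)))"
    proof (intro AE_I2)
      fix x
      have "(norm (t x))^2 \<le> 4/a^2 * exp (a * norm (t x))" by (rule sq_le_exp) (use a in auto)
      then have "exp (t x \<bullet> \<theta>) * (norm (t x))^2 \<le> exp (t x \<bullet> \<theta>) * (4/a^2 * exp (a * norm (t x)))"
        by (intro mult_left_mono) auto
      then show "norm (exp (t x \<bullet> \<theta>) * (norm (t x))^2) \<le> norm (4/a^2 * exp (t x \<bullet> \<theta> + a * norm (t x)))"
        using a by (simp add: exp_add field_simps)
    qed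
  qed simp
qed

lemma int_Nt: assumes "\<theta> \<in> Th"
  shows "integrable \<nu> (\<lambda>x. exp (t x \<bullet> \<theta>) * norm (t x))"
    and "integrable \<nu> (\<lambda>x. exp (t x \<bullet> \<theta>) * (norm (t x))^2)"
    and "integrable \<nu> (\<lambda>x. exp (t x \<bullet> \<theta>) *\<^sub>R t x)"
proof -
  obtain a where a: "a > 0" "integrable \<nu> (\<lambda>x. exp (t x \<bullet> \<theta> + a * norm (t x)))" using dom[OF assms] by blast
  show 1: "integrable \<nu> (\<lambda>x. exp (t x \<bullet> \<theta>) * norm (t x))" using int_exp_mom[OF a] by simp
  show "integrable \<nu> (\<lambda>x. exp (t x \<bullet> \<theta>) * (norm (t x))^2)" using int_exp_mom[OF a] by simp
  show "integrable \<nu> (\<lambda>x. exp (t x \<bullet> \<theta>) *\<^sub>R t x)"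
    by (rule Bochner_Integration.integrable_bound[OF 1]) auto
qed

end

context ef begin

lemma jensen:
  assumes th': "\<theta>' \<in> Th" and th: "\<theta> \<in> Th"
  shows "exp (mu \<theta>' \<bullet> (\<theta> - \<theta>')) * Z \<theta>' \<le> Z \<theta>"
    and "exp (mu \<theta>' \<bullet> (\<theta> - \<theta>')) * Z \<theta>' = Z \<theta> \<Longrightarrow> \<theta> = \<theta>'"
proof -
  define h where "h = \<theta> - \<theta>'"
  define c where "c = mu \<theta>' \<bullet> h"
  define f where "f x = exp c * (exp (t x \<bullet> \<theta>') * (1 + (t x \<bullet> h - c)))" for x
  define g where "g x = exp (t x \<bullet> \<theta>)" for x
  have pw: "g x - f x = exp (t x \<bullet> \<theta>') * exp c * (exp (t x \<bullet> h - c) - (1 + (t x \<bullet> h - c)))" for x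
  proof -
    have "t x \<bullet> \<theta> = t x \<bullet> \<theta>' + c + (t x \<bullet> h - c)" by (simp add: h_def inner_diff_right)
    then have "exp (t x \<bullet> \<theta>) = exp (t x \<bullet> \<theta>') * exp c * exp (t x \<bullet> h - c)"
      by (simp flip: exp_add)
    then show ?thesis unfolding f_def g_def by (simp add: algebra_simps)
  qed
  have pwnn: "0 \<le> g x - f x" for x
    unfolding pw using exp_ge_add_one_self[of "t x \<bullet> h - c"] by (intro mult_nonneg_nonneg) auto
  have iZ': "integrable \<nu> (\<lambda>x. exp (t x \<bullet> \<theta>'))" using th' Th_iff by blast
  have iN': "integrable \<nu> (\<lambda>x. exp (t x \<bullet> \<theta>') *\<^sub>R t x)" using int_Nt(3)[OF th'] .
  have iNh: "integrable \<nu> (\<lambda>x. (exp (t x \<bullet> \<theta>') *\<^sub>R t x) \<bullet> h)" using iN' by (rule integrable_inner_left)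
  have eqf: "f x = exp c * ((1 - c) * exp (t x \<bullet> \<theta>') + (exp (t x \<bullet> \<theta>') *\<^sub>R t x) \<bullet> h)" for x
    unfolding f_def by (simp add: algebra_simps)
  have if': "integrable \<nu> (\<lambda>x. (1 - c) * exp (t x \<bullet> \<theta>') + (exp (t x \<bullet> \<theta>') *\<^sub>R t x) \<bullet> h)"
    using iZ' iNh by (intro Bochner_Integration.integrable_add integrable_mult_right) auto
  have i_f: "integrable \<nu> f" unfolding eqf using if' by (rule integrable_mult_right)
  have i_g: "integrable \<nu> g" unfolding g_def using th Th_iff by blast
  have e: "(\<integral>x. exp (t x \<bullet> \<theta>') * (t x \<bullet> h) \<partial>\<nu>) = N \<theta>' \<bullet> h"
  proof -
    have "(\<integral>x. (exp (t x \<bullet> \<theta>') *\<^sub>R t x) \<bullet> h \<partial>\<nu>) = (\<integral>x. exp (t x \<bullet> \<theta>') *\<^sub>R t x \<partial>\<nu>) \<bullet> h"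
      by (rule integral_inner_left) (use iN' in auto)
    then show ?thesis by (simp add: N_def)
  qed
  have "integral\<^sup>L \<nu> f = exp c * ((1 - c) * Z \<theta>' + N \<theta>' \<bullet> h)"
    unfolding eqf using iZ' iNh iN' by (simp add: Z_def e)
  also have "N \<theta>' \<bullet> h = Z \<theta>' * c" unfolding c_def N_eq[OF th'] by simp
  finally have intf: "integral\<^sup>L \<nu> f = exp c * Z \<theta>'" by (simp add: algebra_simps)
  have idiff: "integral\<^sup>L \<nu> (\<lambda>x. g x - f x) = integral\<^sup>L \<nu> g - integral\<^sup>L \<nu> f"
    by (rule Bochner_Integration.integral_diff[OF i_g i_f])
  have ig: "integral\<^sup>L \<nu> g = Z \<theta>" unfolding g_def Z_def ..
  have "integral\<^sup>L \<nu> (\<lambda>x. g x - f x) = Z \<theta> - exp c * Z \<theta>'"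
    unfolding idiff ig intf ..
  moreover have "0 \<le> integral\<^sup>L \<nu> (\<lambda>x. g x - f x)" using pwnn by (intro integral_nonneg_AE) auto
  ultimately show "exp (mu \<theta>' \<bullet> (\<theta> - \<theta>')) * Z \<theta>' \<le> Z \<theta>" unfolding c_def h_def by simp
  assume eq: "exp (mu \<theta>' \<bullet> (\<theta> - \<theta>')) * Z \<theta>' = Z \<theta>"
  have "integral\<^sup>L \<nu> (\<lambda>x. g x - f x) = 0"
    unfolding idiff ig intf using eq by (simp add: c_def h_def)
  then have "AE x in \<nu>. g x - f x = 0"
    using i_f i_g pwnn by (subst (asm) integral_nonneg_eq_0_iff_AE) auto
  then have "AE x in \<nu>. t x \<bullet> h = c"
  proof eventually_elim
    case (elim x)
    then have "exp (t x \<bullet> h - c) - (1 + (t x \<bullet> h - c)) = 0" unfolding pw by simp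
    then have "t x \<bullet> h - c = 0" using exp_eq_one_plus[of "t x \<bullet> h - c"] by linarith
    then show ?case by simp
  qed
  then have "h = 0" using minimal unfolding minimal_rep_def by blast
  then show "\<theta> = \<theta>'" unfolding h_def by simp
qed

lemma F1:
  assumes th': "\<theta>' \<in> Th" and th: "\<theta> \<in> Th"
  shows "A \<theta>' + mu \<theta>' \<bullet> (\<theta> - \<theta>') \<le> A \<theta>"
proof -
  have "ln (exp (mu \<theta>' \<bullet> (\<theta> - \<theta>')) * Z \<theta>') \<le> ln (Z \<theta>)"
    using jensen(1)[OF assms] Z_pos[OF th'] Z_pos[OF th] by (subst ln_le_cancel_iff) auto
  then show ?thesis using Z_pos[OF th'] by (simp add: A_def ln_mult)
qed

lemma F1_strict:
  assumes th': "\<theta>' \<in> Th" and th: "\<theta> \<in> Th" and ne: "\<theta> \<noteq> \<theta>'"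
  shows "A \<theta>' + mu \<theta>' \<bullet> (\<theta> - \<theta>') < A \<theta>"
proof -
  have "exp (mu \<theta>' \<bullet> (\<theta> - \<theta>')) * Z \<theta>' < Z \<theta>"
    using jensen[OF assms(1,2)] ne by fastforce
  then have "ln (exp (mu \<theta>' \<bullet> (\<theta> - \<theta>')) * Z \<theta>') < ln (Z \<theta>)"
    using Z_pos[OF th'] Z_pos[OF th] by (subst ln_less_cancel_iff) auto
  then show ?thesis using Z_pos[OF th'] by (simp add: A_def ln_mult)
qed

lemma mu_inj: assumes "\<theta>1 \<in> Th" "\<theta>2 \<in> Th" "mu \<theta>1 = mu \<theta>2" shows "\<theta>1 = \<theta>2"
proof (rule ccontr)
  assume ne: "\<theta>1 \<noteq> \<theta>2"
  have "A \<theta>1 + mu \<theta>1 \<bullet> (\<theta>2 - \<theta>1) < A \<theta>2" using F1_strict[OF assms(1,2)] ne by auto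
  moreover have "A \<theta>2 + mu \<theta>2 \<bullet> (\<theta>1 - \<theta>2) < A \<theta>1" using F1_strict[OF assms(2,1)] ne by auto
  ultimately show False using assms(3) by (simp add: inner_diff_right)
qed

lemma canon_eq: assumes "\<theta> \<in> Th" shows "canon_of_mean \<nu> t (mu \<theta>) = \<theta>"
  unfolding canon_of_mean_def using assms mu_inj by (intro the_equality) auto

lemma conj_at_mu: assumes th': "\<theta>' \<in> Th"
  shows "conj_A \<nu> t (mu \<theta>') = ereal (mu \<theta>' \<bullet> \<theta>' - A \<theta>')"
  unfolding conj_A_def
proof (rule antisym)
  show "(SUP \<theta>. ereal (mu \<theta>' \<bullet> \<theta>) - log_partition \<nu> t \<theta>) \<le> ereal (mu \<theta>' \<bullet> \<theta>' - A \<theta>')"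
  proof (rule SUP_least)
    fix \<theta>
    show "ereal (mu \<theta>' \<bullet> \<theta>) - log_partition \<nu> t \<theta> \<le> ereal (mu \<theta>' \<bullet> \<theta>' - A \<theta>')"
    proof (cases "\<theta> \<in> Th")
      case True
      have "mu \<theta>' \<bullet> \<theta> - A \<theta> \<le> mu \<theta>' \<bullet> \<theta>' - A \<theta>'"
        using F1[OF th' True] by (simp add: inner_diff_right)
      then show ?thesis using True by (simp add: lp_eq)
    next
      case False
      then show ?thesis by (simp add: lp_out)
    qed
  qed
  have "ereal (mu \<theta>' \<bullet> \<theta>' - A \<theta>') = ereal (mu \<theta>' \<bullet> \<theta>') - log_partition \<nu> t \<theta>'"
    using th' by (simp add: lp_eq)
  also have "\<dots> \<le> (SUP \<theta>. ereal (mu \<theta>' \<bullet> \<theta>) - log_partition \<nu> t \<theta>)" by (rule SUP_upper) auto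
  finally show "ereal (mu \<theta>' \<bullet> \<theta>' - A \<theta>') \<le> (SUP \<theta>. ereal (mu \<theta>' \<bullet> \<theta>) - log_partition \<nu> t \<theta>)" .
qed

lemma KL_in: assumes "\<theta>' \<in> Th" "\<theta> \<in> Th"
  shows "KL_div \<nu> t (mu \<theta>') \<theta> = ereal (A \<theta> - A \<theta>' - mu \<theta>' \<bullet> (\<theta> - \<theta>'))"
  unfolding KL_div_def using assms by (simp add: conj_at_mu lp_eq inner_diff_right algebra_simps)

lemma KL_out: assumes "\<theta>' \<in> Th" "\<theta> \<notin> Th"
  shows "KL_div \<nu> t (mu \<theta>') \<theta> = \<infinity>"
  unfolding KL_div_def using assms by (simp add: conj_at_mu lp_out)

end

lemma min_sq_scale: fixes s u :: real assumes "0 \<le> s" "s \<le> 1"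
  shows "s^2 * min (u^2) 1 \<le> min ((s * u)^2) 1"
proof -
  have s2: "s^2 \<le> 1" using assms by (simp add: power_le_one)
  show ?thesis
  proof (cases "u^2 \<le> 1")
    case True
    then have "(s*u)^2 \<le> 1" using s2 by (simp add: power_mult_distrib) (meson mult_le_one zero_le_power2 order_trans)
    then show ?thesis using True by (simp add: power_mult_distrib min_def)
  next
    case False
    then have "s^2 \<le> (s*u)^2" using assms by (simp add: power_mult_distrib mult_le_cancel_left1 zero_le_power2)
    then show ?thesis using False s2 by (simp add: min_def)
  qed
qed

lemma ln_one_plus_ge: fixes x :: real assumes "0 \<le> x" "x \<le> 1" shows "x / 2 \<le> ln (1 + x)"
proof -
  have xx: "x * x \<le> x" using assms by (intro mult_right_le_one_le) auto
  have "ln (1 / (1 + x)) \<le> 1 / (1 + x) - 1" using assms by (intro ln_le_minus_one) auto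
  then have "1 - 1 / (1 + x) \<le> ln (1 + x)" using assms by (simp add: ln_div)
  moreover have "x / 2 \<le> 1 - 1 / (1 + x)" using assms xx by (simp add: field_simps)
  ultimately show ?thesis by linarith
qed

context ef begin
lemma int_exp_mom_gen:
  fixes \<phi> :: "'x \<Rightarrow> real"
  assumes a: "a > 0" and [measurable]: "\<phi> \<in> borel_measurable \<nu>"
    and int: "integrable \<nu> (\<lambda>x. exp (\<phi> x + a * norm (t x)))"
  shows "integrable \<nu> (\<lambda>x. exp (\<phi> x) * norm (t x))"
    and "integrable \<nu> (\<lambda>x. exp (\<phi> x) * (norm (t x))^2)"
proof -
  show "integrable \<nu> (\<lambda>x. exp (\<phi> x) * norm (t x))"
  proof (rule Bochner_Integration.integrable_bound[OF integrable_mult_right[OF int, of "1/a"]])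
    show "AE x in \<nu>. norm (exp (\<phi> x) * norm (t x)) \<le> norm (1 / a * exp (\<phi> x + a * norm (t x)))"
    proof (intro AE_I2)
      fix x
      have "norm (t x) \<le> exp (a * norm (t x)) / a" by (rule lin_le_exp) (use a in auto)
      then have "exp (\<phi> x) * norm (t x) \<le> exp (\<phi> x) * (exp (a * norm (t x)) / a)"
        by (intro mult_left_mono) auto
      then show "norm (exp (\<phi> x) * norm (t x)) \<le> norm (1 / a * exp (\<phi> x + a * norm (t x)))"
        using a by (simp add: exp_add field_simps)
    qed
  qed simp
  show "integrable \<nu> (\<lambda>x. exp (\<phi> x) * (norm (t x))^2)"
  proof (rule Bochner_Integration.integrable_bound[OF integrable_mult_right[OF int, of "4/a^2"]])
    show "AE x in \<nu>. norm (exp (\<phi> x) * (norm (t x))^2) \<le> norm (4/a^2 * exp (\<phi> x + a * norm (t x)))"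
    proof (intro AE_I2)
      fix x
      have "(norm (t x))^2 \<le> 4/a^2 * exp (a * norm (t x))" by (rule sq_le_exp) (use a in auto)
      then have "exp (\<phi> x) * (norm (t x))^2 \<le> exp (\<phi> x) * (4/a^2 * exp (a * norm (t x)))"
        by (intro mult_left_mono) auto
      then show "norm (exp (\<phi> x) * (norm (t x))^2) \<le> norm (4/a^2 * exp (\<phi> x + a * norm (t x)))"
        using a by (simp add: exp_add field_simps)
    qed
  qed simp
qed
end

locale ef0 = ef +
  fixes \<theta>0
  assumes th0: "\<theta>0 \<in> Th"
begin

definition a0 where "a0 = (SOME a. a > 0 \<and> integrable \<nu> (\<lambda>x. exp (t x \<bullet> \<theta>0 + a * norm (t x))))"
lemma a0: "a0 > 0" "integrable \<nu> (\<lambda>x. exp (t x \<bullet> \<theta>0 + a0 * norm (t x)))"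
  using someI_ex[OF dom[OF th0]] unfolding a0_def by auto

definition r0 where "r0 = min 1 (a0/4)"
lemma r0: "0 < r0" "r0 \<le> 1" "4 * r0 \<le> a0"
  using a0 unfolding r0_def by auto

definition Wt where "Wt x = exp (t x \<bullet> \<theta>0 + (a0/2) * norm (t x))" for x

lemma Wt_int: "integrable \<nu> Wt"
proof (rule Bochner_Integration.integrable_bound[OF a0(2)])
  show "AE x in \<nu>. norm (Wt x) \<le> norm (exp (t x \<bullet> \<theta>0 + a0 * norm (t x)))"
    using a0(1) by (intro AE_I2) (simp add: Wt_def)
qed (unfold Wt_def, measurable)

lemma Wt_mom: "integrable \<nu> (\<lambda>x. Wt x * norm (t x))" "integrable \<nu> (\<lambda>x. Wt x * (norm (t x))^2)"
proof -
  have eq: "(\<lambda>x. exp ((t x \<bullet> \<theta>0 + (a0/2) * norm (t x)) + (a0/2) * norm (t x))) = (\<lambda>x. exp (t x \<bullet> \<theta>0 + a0 * norm (t x)))"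
    by (simp add: algebra_simps)
  have i: "integrable \<nu> (\<lambda>x. exp ((t x \<bullet> \<theta>0 + (a0/2) * norm (t x)) + (a0/2) * norm (t x)))"
    unfolding eq by (rule a0(2))
  have ap: "a0/2 > 0" using a0 by simp
  show "integrable \<nu> (\<lambda>x. Wt x * norm (t x))" "integrable \<nu> (\<lambda>x. Wt x * (norm (t x))^2)"
    using int_exp_mom_gen[OF ap _ i] unfolding Wt_def by auto
qed

lemma Wt_pos: "0 < Wt x" unfolding Wt_def by simp

lemma exp_le_Wt:
  assumes "norm h + norm k \<le> a0/2"
  shows "exp (t x \<bullet> (\<theta>0 + h) + \<bar>t x \<bullet> k\<bar>) \<le> Wt x"
proof -
  have "t x \<bullet> h \<le> norm (t x) * norm h" by (rule norm_cauchy_schwarz)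
  moreover have "\<bar>t x \<bullet> k\<bar> \<le> norm (t x) * norm k" by (rule Cauchy_Schwarz_ineq2)
  moreover have "norm (t x) * (norm h + norm k) \<le> norm (t x) * (a0/2)"
    using assms by (intro mult_left_mono) auto
  ultimately have "t x \<bullet> (\<theta>0 + h) + \<bar>t x \<bullet> k\<bar> \<le> t x \<bullet> \<theta>0 + (a0/2) * norm (t x)"
    by (simp add: inner_add_right algebra_simps)
  then show ?thesis unfolding Wt_def by simp
qed

lemma exp_le_Wt1: assumes "norm (\<theta> - \<theta>0) \<le> 2 * r0" shows "exp (t x \<bullet> \<theta>) \<le> Wt x"
  using exp_le_Wt[of "\<theta> - \<theta>0" 0 x] assms r0 by simp

lemma in_Th: assumes "norm (\<theta> - \<theta>0) \<le> 2 * r0" shows "\<theta> \<in> Th"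
  unfolding Th_iff
  by (rule Bochner_Integration.integrable_bound[OF Wt_int]) (use exp_le_Wt1[OF assms] Wt_pos in \<open>auto intro!: AE_I2 simp: less_imp_le\<close>)

definition zl where "zl = Z \<theta>0 * exp (- (2 * r0) * norm (mu \<theta>0))"
lemma zl_pos: "0 < zl" unfolding zl_def using Z_pos[OF th0] by simp

lemma Z_low: assumes "norm (\<theta> - \<theta>0) \<le> 2 * r0" shows "zl \<le> Z \<theta>"
proof -
  have "- (mu \<theta>0 \<bullet> (\<theta> - \<theta>0)) \<le> norm (mu \<theta>0) * norm (\<theta> - \<theta>0)"
    using Cauchy_Schwarz_ineq2[of "mu \<theta>0" "\<theta> - \<theta>0"] by linarith
  also have "\<dots> \<le> norm (mu \<theta>0) * (2 * r0)" using assms by (intro mult_left_mono) auto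
  finally have "- (2 * r0) * norm (mu \<theta>0) \<le> mu \<theta>0 \<bullet> (\<theta> - \<theta>0)" by (simp add: algebra_simps)
  then have "exp (- (2 * r0) * norm (mu \<theta>0)) * Z \<theta>0 \<le> exp (mu \<theta>0 \<bullet> (\<theta> - \<theta>0)) * Z \<theta>0"
    using Z_pos[OF th0] by (intro mult_right_mono) auto
  also have "\<dots> \<le> Z \<theta>" by (rule jensen(1)[OF th0 in_Th[OF assms]])
  finally show ?thesis unfolding zl_def by (simp add: mult.commute)
qed

definition M1 where "M1 = (\<integral>x. Wt x * norm (t x) \<partial>\<nu>)"
definition M2 where "M2 = (\<integral>x. Wt x * (norm (t x))^2 \<partial>\<nu>)"
lemma M_nonneg: "0 \<le> M1" "0 \<le> M2"
  unfolding M1_def M2_def using Wt_pos by (auto intro!: integral_nonneg_AE simp: less_imp_le)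

lemma exp_diff_Wt:
  assumes "norm (\<theta> - \<theta>0) \<le> 2 * r0" "norm (\<theta>' - \<theta>0) \<le> 2 * r0"
  shows "\<bar>exp (t x \<bullet> \<theta>) - exp (t x \<bullet> \<theta>')\<bar> \<le> Wt x * norm (t x) * norm (\<theta> - \<theta>')"
proof -
  have "\<bar>exp (t x \<bullet> \<theta>) - exp (t x \<bullet> \<theta>')\<bar> \<le> \<bar>t x \<bullet> \<theta> - t x \<bullet> \<theta>'\<bar> * exp (max (t x \<bullet> \<theta>) (t x \<bullet> \<theta>'))"
    by (rule exp_diff_le)
  also have "\<dots> \<le> (norm (t x) * norm (\<theta> - \<theta>')) * Wt x"
  proof (rule mult_mono)
    show "\<bar>t x \<bullet> \<theta> - t x \<bullet> \<theta>'\<bar> \<le> norm (t x) * norm (\<theta> - \<theta>')"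
      using Cauchy_Schwarz_ineq2[of "t x" "\<theta> - \<theta>'"] by (simp add: inner_diff_right)
    show "exp (max (t x \<bullet> \<theta>) (t x \<bullet> \<theta>')) \<le> Wt x"
      using exp_le_Wt1[OF assms(1), of x] exp_le_Wt1[OF assms(2), of x] by (simp add: max_def)
  qed auto
  finally show ?thesis by (simp add: algebra_simps)
qed

lemma Z_lip:
  assumes "norm (\<theta> - \<theta>0) \<le> 2 * r0" "norm (\<theta>' - \<theta>0) \<le> 2 * r0"
  shows "\<bar>Z \<theta> - Z \<theta>'\<bar> \<le> M1 * norm (\<theta> - \<theta>')"
proof -
  have i1: "integrable \<nu> (\<lambda>x. exp (t x \<bullet> \<theta>))" "integrable \<nu> (\<lambda>x. exp (t x \<bullet> \<theta>'))"
    using in_Th[OF assms(1)] in_Th[OF assms(2)] Th_iff by auto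
  have "Z \<theta> - Z \<theta>' = (\<integral>x. exp (t x \<bullet> \<theta>) - exp (t x \<bullet> \<theta>') \<partial>\<nu>)"
    unfolding Z_def by (rule Bochner_Integration.integral_diff[OF i1, symmetric])
  also have "\<bar>\<dots>\<bar> \<le> (\<integral>x. \<bar>exp (t x \<bullet> \<theta>) - exp (t x \<bullet> \<theta>')\<bar> \<partial>\<nu>)" by (rule integral_abs_bound)
  also have "\<dots> \<le> (\<integral>x. Wt x * norm (t x) * norm (\<theta> - \<theta>') \<partial>\<nu>)"
    using exp_diff_Wt[OF assms] Wt_mom(1) Wt_pos
    by (intro integral_mono') (auto intro!: mult_nonneg_nonneg simp: less_imp_le)
  also have "\<dots> = M1 * norm (\<theta> - \<theta>')" unfolding M1_def by simp
  finally show ?thesis .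
qed

lemma N_lip:
  assumes "norm (\<theta> - \<theta>0) \<le> 2 * r0" "norm (\<theta>' - \<theta>0) \<le> 2 * r0"
  shows "norm (N \<theta> - N \<theta>') \<le> M2 * norm (\<theta> - \<theta>')"
proof -
  have i1: "integrable \<nu> (\<lambda>x. exp (t x \<bullet> \<theta>) *\<^sub>R t x)" "integrable \<nu> (\<lambda>x. exp (t x \<bullet> \<theta>') *\<^sub>R t x)"
    using int_Nt(3)[OF in_Th[OF assms(1)]] int_Nt(3)[OF in_Th[OF assms(2)]] by auto
  have "N \<theta> - N \<theta>' = (\<integral>x. exp (t x \<bullet> \<theta>) *\<^sub>R t x - exp (t x \<bullet> \<theta>') *\<^sub>R t x \<partial>\<nu>)"
    unfolding N_def by (rule Bochner_Integration.integral_diff[OF i1, symmetric])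
  also have "norm \<dots> \<le> (\<integral>x. norm (exp (t x \<bullet> \<theta>) *\<^sub>R t x - exp (t x \<bullet> \<theta>') *\<^sub>R t x) \<partial>\<nu>)"
    by (rule integral_norm_bound)
  also have "\<dots> \<le> (\<integral>x. Wt x * (norm (t x))^2 * norm (\<theta> - \<theta>') \<partial>\<nu>)"
  proof (intro integral_mono')
    show "integrable \<nu> (\<lambda>x. Wt x * (norm (t x))^2 * norm (\<theta> - \<theta>'))" using Wt_mom(2) by simp
    fix x
    have "norm (exp (t x \<bullet> \<theta>) *\<^sub>R t x - exp (t x \<bullet> \<theta>') *\<^sub>R t x) = \<bar>exp (t x \<bullet> \<theta>) - exp (t x \<bullet> \<theta>')\<bar> * norm (t x)"
      by (simp flip: scaleR_diff_left)
    also have "\<dots> \<le> (Wt x * norm (t x) * norm (\<theta> - \<theta>')) * norm (t x)"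
      using exp_diff_Wt[OF assms] by (intro mult_right_mono) auto
    finally show "norm (exp (t x \<bullet> \<theta>) *\<^sub>R t x - exp (t x \<bullet> \<theta>') *\<^sub>R t x) \<le> Wt x * (norm (t x))^2 * norm (\<theta> - \<theta>')"
      by (simp add: power2_eq_square algebra_simps)
    show "0 \<le> Wt x * (norm (t x))^2 * norm (\<theta> - \<theta>')" using Wt_pos[of x] by (simp add: less_imp_le)
  qed
  also have "\<dots> = M2 * norm (\<theta> - \<theta>')" unfolding M2_def by simp
  finally show ?thesis .
qed

lemma N_bound:
  assumes "norm (\<theta> - \<theta>0) \<le> 2 * r0"
  shows "norm (N \<theta>) \<le> M1"
proof -
  have "norm (N \<theta>) \<le> (\<integral>x. norm (exp (t x \<bullet> \<theta>) *\<^sub>R t x) \<partial>\<nu>)" unfolding N_def by (rule integral_norm_bound)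
  also have "\<dots> \<le> M1" unfolding M1_def
  proof (intro integral_mono')
    show "integrable \<nu> (\<lambda>x. Wt x * norm (t x))" by (rule Wt_mom(1))
    fix x
    show "norm (exp (t x \<bullet> \<theta>) *\<^sub>R t x) \<le> Wt x * norm (t x)"
      using exp_le_Wt1[OF assms, of x] by (simp add: mult_right_mono)
    show "0 \<le> Wt x * norm (t x)" using Wt_pos[of x] by (simp add: less_imp_le)
  qed
  finally show ?thesis .
qed

definition L0 where "L0 = M2 / zl + M1 * M1 / (zl * zl)"

lemma mu_lip:
  assumes a1: "norm (\<theta> - \<theta>0) \<le> 2 * r0" and a2: "norm (\<theta>' - \<theta>0) \<le> 2 * r0"
  shows "norm (mu \<theta> - mu \<theta>') \<le> L0 * norm (\<theta> - \<theta>')"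
proof -
  define z z' n n' where "z = Z \<theta>" "z' = Z \<theta>'" "n = N \<theta>" "n' = N \<theta>'"
  have z: "zl \<le> z" "zl \<le> z'" using Z_low[OF a1] Z_low[OF a2] unfolding z_z'_n_n'_def by auto
  have zp: "0 < z" "0 < z'" using z zl_pos by auto
  have d: "norm (\<theta> - \<theta>') \<ge> 0" by simp
  have "mu \<theta> - mu \<theta>' = (1/z) *\<^sub>R (n - n') + (1/z - 1/z') *\<^sub>R n'"
    using mu_eq[OF in_Th[OF a1]] mu_eq[OF in_Th[OF a2]] unfolding z_z'_n_n'_def
    by (simp add: algebra_simps)
  also have "norm \<dots> \<le> norm ((1/z) *\<^sub>R (n - n')) + norm ((1/z - 1/z') *\<^sub>R n')" by (rule norm_triangle_ineq)
  also have "norm ((1/z) *\<^sub>R (n - n')) \<le> (1/zl) * (M2 * norm (\<theta> - \<theta>'))"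
  proof -
    have "norm ((1/z) *\<^sub>R (n - n')) = (1/z) * norm (n - n')" using zp by simp
    also have "\<dots> \<le> (1/zl) * (M2 * norm (\<theta> - \<theta>'))"
      using N_lip[OF a1 a2] z zp zl_pos M_nonneg unfolding z_z'_n_n'_def
      by (intro mult_mono) (auto simp: divide_simps)
    finally show ?thesis .
  qed
  also have "norm ((1/z - 1/z') *\<^sub>R n') \<le> (M1 * norm (\<theta> - \<theta>') / (zl * zl)) * M1"
  proof -
    have "\<bar>1/z - 1/z'\<bar> = \<bar>z' - z\<bar> / (z * z')" using zp by (simp add: field_simps abs_div)
    also have "\<dots> \<le> (M1 * norm (\<theta> - \<theta>')) / (zl * zl)"
    proof (rule frac_le)
      show "\<bar>z' - z\<bar> \<le> M1 * norm (\<theta> - \<theta>')" using Z_lip[OF a1 a2] unfolding z_z'_n_n'_def by (simp add: abs_minus_commute)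
      show "zl * zl \<le> z * z'" using z zl_pos by (intro mult_mono) auto
    qed (use zl_pos M_nonneg in auto)
    finally have "\<bar>1/z - 1/z'\<bar> \<le> M1 * norm (\<theta> - \<theta>') / (zl * zl)" .
    moreover have "norm n' \<le> M1" using N_bound[OF a2] unfolding z_z'_n_n'_def .
    ultimately have "\<bar>1/z - 1/z'\<bar> * norm n' \<le> (M1 * norm (\<theta> - \<theta>') / (zl * zl)) * M1"
      by (intro mult_mono) auto
    then show ?thesis by simp
  qed
  finally have "norm (mu \<theta> - mu \<theta>') \<le> 1 / zl * (M2 * norm (\<theta> - \<theta>')) + M1 * norm (\<theta> - \<theta>') / (zl * zl) * M1" by simp
  also have "\<dots> = L0 * norm (\<theta> - \<theta>')" unfolding L0_def by (simp add: algebra_simps)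
  finally show ?thesis .
qed

lemma L0_nonneg: "0 \<le> L0" unfolding L0_def using M_nonneg zl_pos by auto

lemma cont_A: "continuous_on (cball \<theta>0 (2 * r0)) A"
proof -
  have "(M1)-lipschitz_on (cball \<theta>0 (2 * r0)) Z"
  proof (rule lipschitz_onI)
    fix x y assume "x \<in> cball \<theta>0 (2 * r0)" "y \<in> cball \<theta>0 (2 * r0)"
    then have "norm (x - \<theta>0) \<le> 2 * r0" "norm (y - \<theta>0) \<le> 2 * r0" by (auto simp: dist_norm norm_minus_commute)
    then show "dist (Z x) (Z y) \<le> M1 * dist x y" using Z_lip by (simp add: dist_norm dist_real_def)
  qed (rule M_nonneg)
  then have "continuous_on (cball \<theta>0 (2 * r0)) Z" by (rule lipschitz_on_continuous_on)
  moreover have "\<forall>x\<in>cball \<theta>0 (2 * r0). Z x \<noteq> 0"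
    using Z_low zl_pos by (force simp: dist_norm norm_minus_commute)
  ultimately show ?thesis unfolding A_def[abs_def] by (rule continuous_on_ln)
qed

lemma cont_mu: "continuous_on (cball \<theta>0 (2 * r0)) mu"
proof -
  have "L0-lipschitz_on (cball \<theta>0 (2 * r0)) mu"
  proof (rule lipschitz_onI)
    fix x y assume "x \<in> cball \<theta>0 (2 * r0)" "y \<in> cball \<theta>0 (2 * r0)"
    then have "norm (x - \<theta>0) \<le> 2 * r0" "norm (y - \<theta>0) \<le> 2 * r0" by (auto simp: dist_norm norm_minus_commute)
    then show "dist (mu x) (mu y) \<le> L0 * dist x y" using mu_lip by (simp add: dist_norm)
  qed (rule L0_nonneg)
  then show ?thesis by (rule lipschitz_on_continuous_on)
qed

definition C2 where "C2 = M2 / zl + 1"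
lemma C2_pos: "0 < C2" unfolding C2_def using M_nonneg zl_pos by (simp add: add_nonneg_pos)

lemma F2:
  assumes a1: "norm (\<theta>' - \<theta>0) \<le> r0" and a2: "norm h \<le> r0"
  shows "A (\<theta>' + h) - A \<theta>' - mu \<theta>' \<bullet> h \<le> C2 * (norm h)^2"
proof -
  have b1: "norm (\<theta>' - \<theta>0) \<le> 2 * r0" using a1 r0 by simp
  have b2: "norm (\<theta>' + h - \<theta>0) \<le> 2 * r0"
    using norm_triangle_ineq[of "\<theta>' - \<theta>0" h] a1 a2 by (simp add: algebra_simps)
  have th': "\<theta>' \<in> Th" and thh: "\<theta>' + h \<in> Th" using in_Th b1 b2 by auto
  define z' zh where "z' = Z \<theta>'" "zh = Z (\<theta>' + h)"
  have zp: "zl \<le> z'" "0 < z'" "0 < zh" using Z_low[OF b1] zl_pos Z_pos[OF thh] unfolding z'_zh_def by auto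
  have iZ': "integrable \<nu> (\<lambda>x. exp (t x \<bullet> \<theta>'))" using th' Th_iff by auto
  have iZh: "integrable \<nu> (\<lambda>x. exp (t x \<bullet> (\<theta>' + h)))" using thh Th_iff by auto
  have iN': "integrable \<nu> (\<lambda>x. (exp (t x \<bullet> \<theta>') *\<^sub>R t x) \<bullet> h)" using int_Nt(3)[OF th'] by (rule integrable_inner_left)
  have eN: "(\<integral>x. (exp (t x \<bullet> \<theta>') *\<^sub>R t x) \<bullet> h \<partial>\<nu>) = N \<theta>' \<bullet> h"
    unfolding N_def by (rule integral_inner_left) (use int_Nt(3)[OF th'] in auto)
  have "zh - z' - N \<theta>' \<bullet> h = (\<integral>x. exp (t x \<bullet> (\<theta>' + h)) - exp (t x \<bullet> \<theta>') - (exp (t x \<bullet> \<theta>') *\<^sub>R t x) \<bullet> h \<partial>\<nu>)"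
    using iZ' iZh iN' unfolding z'_zh_def Z_def eN[symmetric]
    by (simp add: Bochner_Integration.integral_diff)
  also have "\<dots> \<le> (\<integral>x. Wt x * (norm (t x))^2 * (norm h)^2 \<partial>\<nu>)"
  proof (intro integral_mono')
    show "integrable \<nu> (\<lambda>x. Wt x * (norm (t x))^2 * (norm h)^2)" using Wt_mom(2) by simp
    fix x
    define y where "y = t x \<bullet> h"
    have eq: "exp (t x \<bullet> (\<theta>' + h)) - exp (t x \<bullet> \<theta>') - (exp (t x \<bullet> \<theta>') *\<^sub>R t x) \<bullet> h
        = exp (t x \<bullet> \<theta>') * (exp y - 1 - y)"
      by (simp add: y_def inner_add_right exp_add algebra_simps)
    have "exp y - 1 - y \<le> y^2 * exp \<bar>y\<bar> / 2" by (rule exp_up)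
    also have "\<dots> \<le> y^2 * exp \<bar>y\<bar>" by simp
    finally have "exp (t x \<bullet> \<theta>') * (exp y - 1 - y) \<le> exp (t x \<bullet> \<theta>') * (y^2 * exp \<bar>y\<bar>)"
      by (intro mult_left_mono) auto
    also have "\<dots> = y^2 * exp (t x \<bullet> \<theta>' + \<bar>y\<bar>)" by (simp add: exp_add)
    also have "\<dots> \<le> ((norm (t x))^2 * (norm h)^2) * Wt x"
    proof (rule mult_mono)
      have "\<bar>y\<bar> \<le> norm (t x) * norm h" unfolding y_def by (rule Cauchy_Schwarz_ineq2)
      then have "\<bar>y\<bar>^2 \<le> (norm (t x) * norm h)^2" by (intro power_mono) auto
      then show "y^2 \<le> (norm (t x))^2 * (norm h)^2" by (simp add: power_mult_distrib)
      have "exp (t x \<bullet> (\<theta>0 + (\<theta>' - \<theta>0)) + \<bar>t x \<bullet> h\<bar>) \<le> Wt x"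
        using a1 a2 r0 by (intro exp_le_Wt) auto
      then show "exp (t x \<bullet> \<theta>' + \<bar>y\<bar>) \<le> Wt x" by (simp add: y_def)
    qed auto
    finally show "exp (t x \<bullet> (\<theta>' + h)) - exp (t x \<bullet> \<theta>') - (exp (t x \<bullet> \<theta>') *\<^sub>R t x) \<bullet> h \<le> Wt x * (norm (t x))^2 * (norm h)^2"
      unfolding eq by (simp add: algebra_simps)
    show "0 \<le> Wt x * (norm (t x))^2 * (norm h)^2" using Wt_pos[of x] by (simp add: less_imp_le)
  qed
  also have "\<dots> = M2 * (norm h)^2" unfolding M2_def by simp
  finally have key: "zh - z' - N \<theta>' \<bullet> h \<le> M2 * (norm h)^2" .
  have "A (\<theta>' + h) - A \<theta>' = ln (zh / z')" unfolding A_def z'_zh_def using zp by (simp add: ln_div z'_zh_def)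
  also have "\<dots> \<le> zh / z' - 1" using zp by (intro ln_le_minus_one) auto
  finally have "A (\<theta>' + h) - A \<theta>' - mu \<theta>' \<bullet> h \<le> zh / z' - 1 - (N \<theta>' \<bullet> h) / z'"
    using mu_eq[OF th'] unfolding z'_zh_def by simp
  also have "\<dots> = (zh - z' - N \<theta>' \<bullet> h) / z'" using zp by (simp add: field_simps)
  also have "\<dots> \<le> (M2 * (norm h)^2) / zl"
    using key zp M_nonneg zl_pos by (intro frac_le) (auto intro: order_trans[OF _ key])
  also have "\<dots> \<le> C2 * (norm h)^2" unfolding C2_def using zl_pos by (simp add: field_simps)
  finally show ?thesis .
qed

end

context ef0 begin

definition qf where "qf \<omega> = (\<integral>x. exp (t x \<bullet> \<theta>0) * min (((t x - mu \<theta>0) \<bullet> \<omega>)^2) 1 \<partial>\<nu>) / Z \<theta>0"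

lemma Q0_int: "integrable \<nu> (\<lambda>x. exp (t x \<bullet> \<theta>0))" using th0 Th_iff by auto

lemma qf_int: "integrable \<nu> (\<lambda>x. exp (t x \<bullet> \<theta>0) * min (((t x - mu \<theta>0) \<bullet> \<omega>)^2) 1)"
  by (rule Bochner_Integration.integrable_bound[OF Q0_int]) (auto intro!: AE_I2 simp: abs_mult min_def)

lemma qf_bounds: "0 \<le> qf \<omega>" "qf \<omega> \<le> 1"
proof -
  have Zp: "0 < Z \<theta>0" using Z_pos[OF th0] .
  have "0 \<le> (\<integral>x. exp (t x \<bullet> \<theta>0) * min (((t x - mu \<theta>0) \<bullet> \<omega>)^2) 1 \<partial>\<nu>)"
    by (intro integral_nonneg_AE) auto
  then show "0 \<le> qf \<omega>" unfolding qf_def using Zp by simp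
  have "(\<integral>x. exp (t x \<bullet> \<theta>0) * min (((t x - mu \<theta>0) \<bullet> \<omega>)^2) 1 \<partial>\<nu>) \<le> (\<integral>x. exp (t x \<bullet> \<theta>0) \<partial>\<nu>)"
    using qf_int Q0_int by (intro integral_mono) (auto simp: min_def)
  then show "qf \<omega> \<le> 1" unfolding qf_def Z_def[symmetric] using Zp by simp
qed

lemma qf_pos: assumes "\<omega> \<noteq> 0" shows "0 < qf \<omega>"
proof -
  have Zp: "0 < Z \<theta>0" using Z_pos[OF th0] .
  have "(\<integral>x. exp (t x \<bullet> \<theta>0) * min (((t x - mu \<theta>0) \<bullet> \<omega>)^2) 1 \<partial>\<nu>) \<noteq> 0"
  proof
    assume "(\<integral>x. exp (t x \<bullet> \<theta>0) * min (((t x - mu \<theta>0) \<bullet> \<omega>)^2) 1 \<partial>\<nu>) = 0"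
    then have "AE x in \<nu>. exp (t x \<bullet> \<theta>0) * min (((t x - mu \<theta>0) \<bullet> \<omega>)^2) 1 = 0"
      using qf_int by (subst (asm) integral_nonneg_eq_0_iff_AE) auto
    then have "AE x in \<nu>. t x \<bullet> \<omega> = mu \<theta>0 \<bullet> \<omega>"
      by eventually_elim (auto simp: min_def inner_diff_left split: if_splits)
    then have "\<omega> = 0" using minimal unfolding minimal_rep_def by blast
    with assms show False by simp
  qed
  moreover have "0 \<le> qf \<omega>" by (rule qf_bounds)
  ultimately show ?thesis unfolding qf_def using Zp by (simp add: less_le)
qed

definition Kq where "Kq = 2 * (M1 + norm (mu \<theta>0) * Z \<theta>0) / Z \<theta>0"

lemma Q0_le_Wt: "exp (t x \<bullet> \<theta>0) \<le> Wt x" using exp_le_Wt1[of \<theta>0 x] r0 by simp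

lemma qf_lip: "\<bar>qf \<omega> - qf \<omega>'\<bar> \<le> Kq * norm (\<omega> - \<omega>')"
proof -
  have Zp: "0 < Z \<theta>0" using Z_pos[OF th0] .
  define F where "F \<omega> x = exp (t x \<bullet> \<theta>0) * min (((t x - mu \<theta>0) \<bullet> \<omega>)^2) 1" for \<omega> x
  have "(\<integral>x. F \<omega> x \<partial>\<nu>) - (\<integral>x. F \<omega>' x \<partial>\<nu>) = (\<integral>x. F \<omega> x - F \<omega>' x \<partial>\<nu>)"
    using qf_int unfolding F_def by (intro Bochner_Integration.integral_diff[symmetric]) auto
  also have "\<bar>\<dots>\<bar> \<le> (\<integral>x. \<bar>F \<omega> x - F \<omega>' x\<bar> \<partial>\<nu>)" by (rule integral_abs_bound)
  also have "\<dots> \<le> (\<integral>x. 2 * norm (\<omega> - \<omega>') * (Wt x * norm (t x) + norm (mu \<theta>0) * exp (t x \<bullet> \<theta>0)) \<partial>\<nu>)"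
  proof (intro integral_mono')
    show "integrable \<nu> (\<lambda>x. 2 * norm (\<omega> - \<omega>') * (Wt x * norm (t x) + norm (mu \<theta>0) * exp (t x \<bullet> \<theta>0)))"
      using Wt_mom(1) Q0_int by auto
    fix x
    have "\<bar>F \<omega> x - F \<omega>' x\<bar> = exp (t x \<bullet> \<theta>0) * \<bar>min (((t x - mu \<theta>0) \<bullet> \<omega>)^2) 1 - min (((t x - mu \<theta>0) \<bullet> \<omega>')^2) 1\<bar>"
      unfolding F_def by (simp add: abs_mult flip: right_diff_distrib)
    also have "\<dots> \<le> exp (t x \<bullet> \<theta>0) * (2 * \<bar>(t x - mu \<theta>0) \<bullet> \<omega> - (t x - mu \<theta>0) \<bullet> \<omega>'\<bar>)"
      by (intro mult_left_mono min_sq_lip) auto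
    also have "\<bar>(t x - mu \<theta>0) \<bullet> \<omega> - (t x - mu \<theta>0) \<bullet> \<omega>'\<bar> \<le> (norm (t x) + norm (mu \<theta>0)) * norm (\<omega> - \<omega>')"
    proof -
      have "\<bar>(t x - mu \<theta>0) \<bullet> \<omega> - (t x - mu \<theta>0) \<bullet> \<omega>'\<bar> = \<bar>(t x - mu \<theta>0) \<bullet> (\<omega> - \<omega>')\<bar>" by (simp add: inner_diff_right)
      also have "\<dots> \<le> norm (t x - mu \<theta>0) * norm (\<omega> - \<omega>')" by (rule Cauchy_Schwarz_ineq2)
      also have "\<dots> \<le> (norm (t x) + norm (mu \<theta>0)) * norm (\<omega> - \<omega>')"
        by (intro mult_right_mono norm_triangle_ineq4) auto
      finally show ?thesis .
    qed
    then have "exp (t x \<bullet> \<theta>0) * (2 * \<bar>(t x - mu \<theta>0) \<bullet> \<omega> - (t x - mu \<theta>0) \<bullet> \<omega>'\<bar>) \<le> exp (t x \<bullet> \<theta>0) * (2 * ((norm (t x) + norm (mu \<theta>0)) * norm (\<omega> - \<omega>')))"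
      by (intro mult_left_mono) auto
    also have "\<dots> = 2 * norm (\<omega> - \<omega>') * (exp (t x \<bullet> \<theta>0) * norm (t x) + norm (mu \<theta>0) * exp (t x \<bullet> \<theta>0))"
      by (simp add: algebra_simps)
    also have "\<dots> \<le> 2 * norm (\<omega> - \<omega>') * (Wt x * norm (t x) + norm (mu \<theta>0) * exp (t x \<bullet> \<theta>0))"
      using Q0_le_Wt[of x] by (intro mult_left_mono add_right_mono mult_right_mono) auto
    finally show "\<bar>F \<omega> x - F \<omega>' x\<bar> \<le> 2 * norm (\<omega> - \<omega>') * (Wt x * norm (t x) + norm (mu \<theta>0) * exp (t x \<bullet> \<theta>0))" .
    show "0 \<le> 2 * norm (\<omega> - \<omega>') * (Wt x * norm (t x) + norm (mu \<theta>0) * exp (t x \<bullet> \<theta>0))"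
      using Wt_pos[of x] by (intro mult_nonneg_nonneg add_nonneg_nonneg) (auto simp: less_imp_le)
  qed
  also have "\<dots> = 2 * norm (\<omega> - \<omega>') * (M1 + norm (mu \<theta>0) * Z \<theta>0)"
    using Wt_mom(1) Q0_int by (simp add: M1_def Z_def)
  finally have I: "\<bar>(\<integral>x. F \<omega> x \<partial>\<nu>) - (\<integral>x. F \<omega>' x \<partial>\<nu>)\<bar> \<le> 2 * norm (\<omega> - \<omega>') * (M1 + norm (mu \<theta>0) * Z \<theta>0)" .
  have "qf \<omega> - qf \<omega>' = ((\<integral>x. F \<omega> x \<partial>\<nu>) - (\<integral>x. F \<omega>' x \<partial>\<nu>)) / Z \<theta>0"
    unfolding qf_def F_def by (simp add: diff_divide_distrib)
  then have "\<bar>qf \<omega> - qf \<omega>'\<bar> = \<bar>(\<integral>x. F \<omega> x \<partial>\<nu>) - (\<integral>x. F \<omega>' x \<partial>\<nu>)\<bar> / Z \<theta>0"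
    using Zp by (simp add: abs_div)
  also have "\<dots> \<le> (2 * norm (\<omega> - \<omega>') * (M1 + norm (mu \<theta>0) * Z \<theta>0)) / Z \<theta>0"
    using I Zp by (intro divide_right_mono) auto
  also have "\<dots> = Kq * norm (\<omega> - \<omega>')" unfolding Kq_def by simp
  finally show ?thesis .
qed

lemma qm_ex: "\<exists>qm>0. qm \<le> 1 \<and> (\<forall>\<omega>. norm \<omega> = 1 \<longrightarrow> qm \<le> qf \<omega>)"
proof -
  have Kq: "0 \<le> Kq" unfolding Kq_def using M_nonneg Z_pos[OF th0] by auto
  have "Kq-lipschitz_on (sphere 0 1) qf"
  proof (rule lipschitz_onI)
    fix x y
    show "dist (qf x) (qf y) \<le> Kq * dist x y" using qf_lip[of x y] by (simp add: dist_norm dist_real_def)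
  qed (rule Kq)
  then have c: "continuous_on (sphere 0 1) qf" by (rule lipschitz_on_continuous_on)
  obtain b where b: "b \<in> Basis" "qf b = qf b" using nonempty_Basis by blast
  then have bs: "b \<in> sphere 0 1" by simp
  have "\<exists>w\<in>sphere 0 1. \<forall>y\<in>sphere 0 1. qf w \<le> qf y"
    by (rule continuous_attains_inf[OF compact_sphere _ c]) (use bs in blast)
  then obtain w where w: "w \<in> sphere 0 1" "\<forall>y\<in>sphere 0 1. qf w \<le> qf y" by blast
  have "w \<noteq> 0" using w(1) by auto
  then have "0 < qf w" by (rule qf_pos)
  moreover have "qf w \<le> 1" by (rule qf_bounds)
  ultimately show ?thesis using w by (intro exI[of _ "qf w"]) auto
qed

definition qm where "qm = (SOME qm. qm > 0 \<and> qm \<le> 1 \<and> (\<forall>\<omega>. norm \<omega> = 1 \<longrightarrow> qm \<le> qf \<omega>))"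
lemma qm_all: "qm > 0 \<and> qm \<le> 1 \<and> (\<forall>\<omega>. norm \<omega> = 1 \<longrightarrow> qm \<le> qf \<omega>)"
  unfolding qm_def by (rule someI_ex[OF qm_ex])
lemma qm: "0 < qm" "qm \<le> 1" "norm \<omega> = 1 \<Longrightarrow> qm \<le> qf \<omega>"
  using qm_all by blast+

definition cD where "cD = qm / 40"
lemma cD_pos: "0 < cD" unfolding cD_def using qm by simp

lemma D_local:
  assumes h0: "0 < norm h" and hr: "norm h \<le> r0"
  shows "cD * (norm h)^2 \<le> A (\<theta>0 + h) - A \<theta>0 - mu \<theta>0 \<bullet> h"
proof -
  define c where "c = mu \<theta>0 \<bullet> h"
  define s where "s = norm h"
  define \<omega> where "\<omega> = (1 / s) *\<^sub>R h"
  have s: "0 < s" "s \<le> 1" using h0 hr r0 unfolding s_def by auto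
  have nw: "norm \<omega> = 1" unfolding \<omega>_def s_def using h0 by simp
  have hw: "h = s *\<^sub>R \<omega>" unfolding \<omega>_def using s by simp
  have thh: "\<theta>0 + h \<in> Th" using in_Th[of "\<theta>0 + h"] hr r0 by simp
  have Zp: "0 < Z \<theta>0" using Z_pos[OF th0] .
  define m where "m x = min (((t x - mu \<theta>0) \<bullet> h)^2) 1" for x
  define Q where "Q x = exp (t x \<bullet> \<theta>0)" for x
  have iQ: "integrable \<nu> Q" unfolding Q_def by (rule Q0_int)
  have iQZ: "integral\<^sup>L \<nu> Q = Z \<theta>0" unfolding Q_def Z_def ..
  have iQt: "integrable \<nu> (\<lambda>x. (Q x *\<^sub>R t x) \<bullet> h)" unfolding Q_def using int_Nt(3)[OF th0] by (rule integrable_inner_left)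
  have iQm: "integrable \<nu> (\<lambda>x. Q x * m x)" unfolding Q_def m_def by (rule qf_int)
  have eN: "(\<integral>x. (Q x *\<^sub>R t x) \<bullet> h \<partial>\<nu>) = N \<theta>0 \<bullet> h"
    unfolding N_def Q_def by (rule integral_inner_left) (use int_Nt(3)[OF th0] in auto)
  have NZ: "N \<theta>0 \<bullet> h = Z \<theta>0 * c" unfolding N_eq[OF th0] c_def by simp
  define R where "R x = exp c * ((1 - c) * Q x + (Q x *\<^sub>R t x) \<bullet> h + (1/20) * (Q x * m x))" for x
  have iR: "integrable \<nu> R" unfolding R_def using iQ iQt iQm
    by (intro integrable_mult_right Bochner_Integration.integrable_add) auto
  have intR: "integral\<^sup>L \<nu> R = exp c * (Z \<theta>0 + (1/20) * (\<integral>x. Q x * m x \<partial>\<nu>))"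
  proof -
    have "integral\<^sup>L \<nu> R = exp c * ((1 - c) * integral\<^sup>L \<nu> Q + (\<integral>x. (Q x *\<^sub>R t x) \<bullet> h \<partial>\<nu>) + (1/20) * (\<integral>x. Q x * m x \<partial>\<nu>))"
      unfolding R_def using iQ iQt iQm by (simp add: Bochner_Integration.integral_add)
    also have "\<dots> = exp c * (Z \<theta>0 + (1/20) * (\<integral>x. Q x * m x \<partial>\<nu>))"
      unfolding eN NZ iQZ by (simp add: algebra_simps)
    finally show ?thesis .
  qed
  have pw: "R x \<le> exp (t x \<bullet> (\<theta>0 + h))" for x
  proof -
    define z where "z = t x \<bullet> h - c"
    have mz: "m x = min (z^2) 1" unfolding m_def z_def c_def by (simp add: inner_diff_left)
    have "exp (t x \<bullet> (\<theta>0 + h)) = Q x * exp c * exp z" unfolding Q_def z_def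
      by (simp add: inner_add_right flip: exp_add)
    moreover have "1 + z + min (z^2) 1 / 20 \<le> exp z" by (rule exp_low)
    then have "Q x * exp c * (1 + z + min (z^2) 1 / 20) \<le> Q x * exp c * exp z"
      unfolding Q_def by (intro mult_left_mono) auto
    moreover have "R x = Q x * exp c * (1 + z + min (z^2) 1 / 20)"
      unfolding R_def mz z_def by (simp add: algebra_simps)
    ultimately show ?thesis by simp
  qed
  have "integral\<^sup>L \<nu> R \<le> Z (\<theta>0 + h)" unfolding Z_def
    using iR thh Th_iff pw by (intro integral_mono) auto
  then have Zh: "exp c * (Z \<theta>0 + (1/20) * (\<integral>x. Q x * m x \<partial>\<nu>)) \<le> Z (\<theta>0 + h)" unfolding intR .
  have "s^2 * (Z \<theta>0 * qm) \<le> s^2 * (Z \<theta>0 * qf \<omega>)"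
    using qm(3)[OF nw] Zp by (intro mult_left_mono) auto
  also have "\<dots> = s^2 * (\<integral>x. Q x * min (((t x - mu \<theta>0) \<bullet> \<omega>)^2) 1 \<partial>\<nu>)"
    unfolding qf_def Q_def using Zp by simp
  also have "\<dots> = (\<integral>x. Q x * (s^2 * min (((t x - mu \<theta>0) \<bullet> \<omega>)^2) 1) \<partial>\<nu>)"
  proof -
    have "(\<lambda>x. Q x * (s^2 * min (((t x - mu \<theta>0) \<bullet> \<omega>)^2) 1)) = (\<lambda>x. s^2 * (Q x * min (((t x - mu \<theta>0) \<bullet> \<omega>)^2) 1))"
      by (simp add: fun_eq_iff algebra_simps)
    then show ?thesis by (simp only: integral_mult_right_zero)
  qed
  also have "\<dots> \<le> (\<integral>x. Q x * m x \<partial>\<nu>)"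
  proof (rule integral_mono)
    show "integrable \<nu> (\<lambda>x. Q x * (s^2 * min (((t x - mu \<theta>0) \<bullet> \<omega>)^2) 1))"
      using qf_int[of \<omega>] unfolding Q_def by (simp add: algebra_simps)
    show "integrable \<nu> (\<lambda>x. Q x * m x)" by (rule iQm)
    fix x
    have "s^2 * min (((t x - mu \<theta>0) \<bullet> \<omega>)^2) 1 \<le> min ((s * ((t x - mu \<theta>0) \<bullet> \<omega>))^2) 1"
      using s by (intro min_sq_scale) auto
    also have "s * ((t x - mu \<theta>0) \<bullet> \<omega>) = (t x - mu \<theta>0) \<bullet> h" unfolding hw by simp
    finally show "Q x * (s^2 * min (((t x - mu \<theta>0) \<bullet> \<omega>)^2) 1) \<le> Q x * m x"
      unfolding m_def Q_def by (intro mult_left_mono) auto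
  qed
  finally have Qm: "s^2 * (Z \<theta>0 * qm) \<le> (\<integral>x. Q x * m x \<partial>\<nu>)" .
  have "exp c * (Z \<theta>0 * (1 + s^2 * qm / 20)) \<le> exp c * (Z \<theta>0 + (1/20) * (\<integral>x. Q x * m x \<partial>\<nu>))"
    using Qm by (intro mult_left_mono) (auto simp: algebra_simps)
  also have "\<dots> \<le> Z (\<theta>0 + h)" by (rule Zh)
  finally have Zb: "exp c * (Z \<theta>0 * (1 + s^2 * qm / 20)) \<le> Z (\<theta>0 + h)" .
  have xq: "0 \<le> s^2 * qm / 20" "s^2 * qm / 20 \<le> 1"
  proof -
    show "0 \<le> s^2 * qm / 20" using qm by simp
    have "s^2 \<le> 1" using s by (simp add: power_le_one)
    then have "s^2 * qm \<le> 1 * 1" using qm by (intro mult_mono) auto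
    then show "s^2 * qm / 20 \<le> 1" by simp
  qed
  have "ln (exp c * (Z \<theta>0 * (1 + s^2 * qm / 20))) \<le> ln (Z (\<theta>0 + h))"
    using Zb Zp xq Z_pos[OF thh] by (subst ln_le_cancel_iff) (auto intro!: mult_pos_pos)
  then have "c + A \<theta>0 + ln (1 + s^2 * qm / 20) \<le> A (\<theta>0 + h)"
    unfolding A_def using Zp xq by (simp add: ln_mult)
  moreover have "(s^2 * qm / 20) / 2 \<le> ln (1 + s^2 * qm / 20)" by (rule ln_one_plus_ge[OF xq])
  ultimately have "c + A \<theta>0 + s^2 * qm / 40 \<le> A (\<theta>0 + h)" by simp
  then show ?thesis unfolding cD_def c_def s_def by (simp add: algebra_simps)
qed

lemma D_global:
  assumes th: "\<theta> \<in> Th"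
  shows "cD * min (norm (\<theta> - \<theta>0)) r0 * norm (\<theta> - \<theta>0) \<le> A \<theta> - A \<theta>0 - mu \<theta>0 \<bullet> (\<theta> - \<theta>0)"
proof -
  define h where "h = \<theta> - \<theta>0"
  consider "h = 0" | "0 < norm h \<and> norm h \<le> r0" | "r0 < norm h" by force
  then show ?thesis
  proof cases
    case 1 then show ?thesis unfolding h_def by simp
  next
    case 2
    then have "cD * (norm h)^2 \<le> A (\<theta>0 + h) - A \<theta>0 - mu \<theta>0 \<bullet> h" by (intro D_local) auto
    then show ?thesis using 2 unfolding h_def by (simp add: power2_eq_square min_def)
  next
    case 3
    define s where "s = norm h / r0"
    define d where "d = (r0 / norm h) *\<^sub>R h"
    have s1: "1 \<le> s" using 3 r0 unfolding s_def by simp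
    have hne: "h \<noteq> 0" using 3 r0 by auto
    have nd: "norm d = r0" unfolding d_def using 3 r0 hne by simp
    have hd: "h = s *\<^sub>R d" unfolding d_def s_def using 3 r0 hne by simp
    define \<theta>1 where "\<theta>1 = \<theta>0 + d"
    have th1: "\<theta>1 \<in> Th" using in_Th[of \<theta>1] nd r0 unfolding \<theta>1_def by simp
    have D1: "cD * r0^2 \<le> A \<theta>1 - A \<theta>0 - mu \<theta>0 \<bullet> d"
      using D_local[of d] nd r0 unfolding \<theta>1_def by simp
    have f1: "A \<theta>1 + mu \<theta>1 \<bullet> (\<theta> - \<theta>1) \<le> A \<theta>" by (rule F1[OF th1 th])
    have f2: "A \<theta>1 + mu \<theta>1 \<bullet> (\<theta>0 - \<theta>1) \<le> A \<theta>0" by (rule F1[OF th1 th0])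
    have e1: "\<theta> - \<theta>1 = (s - 1) *\<^sub>R d" unfolding \<theta>1_def using hd h_def by (simp add: algebra_simps)
    have e2: "\<theta>0 - \<theta>1 = - d" unfolding \<theta>1_def by simp
    define D1 where "D1 = A \<theta>1 - A \<theta>0 - mu \<theta>0 \<bullet> d"
    have g: "D1 \<le> mu \<theta>1 \<bullet> d - mu \<theta>0 \<bullet> d" using f2 unfolding e2 D1_def by simp
    have "(s - 1) * D1 \<le> (s - 1) * (mu \<theta>1 \<bullet> d - mu \<theta>0 \<bullet> d)" using g s1 by (intro mult_left_mono) auto
    moreover have "A \<theta>1 + (s - 1) * (mu \<theta>1 \<bullet> d) \<le> A \<theta>" using f1 unfolding e1 by simp
    ultimately have "s * D1 \<le> A \<theta> - A \<theta>0 - s * (mu \<theta>0 \<bullet> d)" unfolding D1_def by (simp add: algebra_simps)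
    moreover have "s * (cD * r0^2) \<le> s * D1" using D1 s1 unfolding D1_def by (intro mult_left_mono) auto
    moreover have "s * (cD * r0^2) = cD * r0 * norm h" unfolding s_def using r0 by (simp add: power2_eq_square field_simps)
    moreover have "mu \<theta>0 \<bullet> h = s * (mu \<theta>0 \<bullet> d)" unfolding hd by simp
    ultimately have "cD * r0 * norm h \<le> A \<theta> - A \<theta>0 - mu \<theta>0 \<bullet> h" by linarith
    then show ?thesis using 3 unfolding h_def by (simp add: min_def)
  qed
qed

end

context ef0 begin

lemma ell_close:
  assumes th: "\<theta> \<in> Th" and le: "A \<theta> - A \<theta>0 - mu \<theta>0 \<bullet> (\<theta> - \<theta>0) \<le> \<delta> * norm (\<theta> - \<theta>0)"
    and d: "\<delta> < cD * r0" and dpos: "0 \<le> \<delta>"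
  shows "norm (\<theta> - \<theta>0) \<le> \<delta> / cD"
proof (cases "\<theta> = \<theta>0")
  case True
  then show ?thesis using dpos cD_pos by simp
next
  case False
  then have np: "0 < norm (\<theta> - \<theta>0)" by simp
  have "cD * min (norm (\<theta> - \<theta>0)) r0 * norm (\<theta> - \<theta>0) \<le> \<delta> * norm (\<theta> - \<theta>0)"
    using D_global[OF th] le by linarith
  then have m: "cD * min (norm (\<theta> - \<theta>0)) r0 \<le> \<delta>" using np by simp
  show ?thesis
  proof (cases "norm (\<theta> - \<theta>0) \<le> r0")
    case True
    then have "cD * norm (\<theta> - \<theta>0) \<le> \<delta>" using m by (simp add: min_def)
    then show ?thesis using cD_pos by (simp add: field_simps)
  next
    case False
    then have "cD * r0 \<le> \<delta>" using m by (simp add: min_def)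
    then show ?thesis using d by simp
  qed
qed

lemma ell_close2:
  assumes th: "\<theta> \<in> Th" and ge: "s \<bullet> \<theta>0 - A \<theta>0 \<le> s \<bullet> \<theta> - A \<theta>"
    and d: "norm (s - mu \<theta>0) < cD * r0"
  shows "norm (\<theta> - \<theta>0) \<le> norm (s - mu \<theta>0) / cD"
proof (rule ell_close[OF th _ d norm_ge_zero])
  have "A \<theta> - A \<theta>0 - mu \<theta>0 \<bullet> (\<theta> - \<theta>0) \<le> (s - mu \<theta>0) \<bullet> (\<theta> - \<theta>0)"
    using ge by (simp add: inner_diff_left inner_diff_right)
  also have "\<dots> \<le> norm (s - mu \<theta>0) * norm (\<theta> - \<theta>0)" by (rule norm_cauchy_schwarz)
  finally show "A \<theta> - A \<theta>0 - mu \<theta>0 \<bullet> (\<theta> - \<theta>0) \<le> norm (s - mu \<theta>0) * norm (\<theta> - \<theta>0)" .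
qed

lemma inv_lip:
  assumes th: "\<theta> \<in> Th" and d: "norm (mu \<theta> - mu \<theta>0) < cD * r0"
  shows "norm (\<theta> - \<theta>0) \<le> norm (mu \<theta> - mu \<theta>0) / cD"
proof (rule ell_close2[OF th _ d])
  have "A \<theta> + mu \<theta> \<bullet> (\<theta>0 - \<theta>) \<le> A \<theta>0" by (rule F1[OF th th0])
  then show "mu \<theta> \<bullet> \<theta>0 - A \<theta>0 \<le> mu \<theta> \<bullet> \<theta> - A \<theta>" by (simp add: inner_diff_right)
qed

lemma compact_K:
  assumes "closed C"
  shows "compact {\<theta> \<in> cball \<theta>0 r0. mu \<theta> \<in> C}"
proof -
  have sub: "cball \<theta>0 r0 \<subseteq> cball \<theta>0 (2 * r0)" using r0 by (intro subset_cball) auto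
  have "continuous_on (cball \<theta>0 r0) mu" using cont_mu sub by (rule continuous_on_subset)
  then have "closed (cball \<theta>0 r0 \<inter> mu -` C)" using assms by (intro continuous_closed_preimage) auto
  moreover have "{\<theta> \<in> cball \<theta>0 r0. mu \<theta> \<in> C} = cball \<theta>0 r0 \<inter> mu -` C" by auto
  ultimately have "closed {\<theta> \<in> cball \<theta>0 r0. mu \<theta> \<in> C}" by simp
  moreover have "bounded {\<theta> \<in> cball \<theta>0 r0. mu \<theta> \<in> C}" by (rule bounded_subset[OF bounded_cball]) auto
  ultimately show ?thesis using compact_eq_bounded_closed by blast
qed

lemma compact_K2:
  assumes "closed C" "closed C'"
  shows "compact {\<theta> \<in> cball \<theta>0 r0. mu \<theta> \<in> C \<and> \<theta> \<in> C'}"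
proof -
  have "{\<theta> \<in> cball \<theta>0 r0. mu \<theta> \<in> C \<and> \<theta> \<in> C'} = {\<theta> \<in> cball \<theta>0 r0. mu \<theta> \<in> C} \<inter> C'" by auto
  then show ?thesis using compact_K[OF assms(1)] assms(2) by (simp add: compact_Int_closed)
qed

lemma cball_r0: "\<theta> \<in> cball \<theta>0 r0 \<Longrightarrow> norm (\<theta> - \<theta>0) \<le> r0"
  by (simp add: dist_norm norm_minus_commute)

lemma cball_r0_Th: assumes "\<theta> \<in> cball \<theta>0 r0" shows "\<theta> \<in> Th"
proof -
  have "norm (\<theta> - \<theta>0) \<le> r0" using cball_r0[OF assms] .
  then have "norm (\<theta> - \<theta>0) \<le> 2 * r0" using r0 by simp
  then show ?thesis by (rule in_Th)
qed

lemma cont_A_r0: "continuous_on (cball \<theta>0 r0) A"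
  using cont_A by (rule continuous_on_subset) (use r0 in \<open>auto intro: subset_cball\<close>)

lemma cont_mu_r0: "continuous_on (cball \<theta>0 r0) mu"
  using cont_mu by (rule continuous_on_subset) (use r0 in \<open>auto intro: subset_cball\<close>)

lemma glob_max:
  assumes d: "norm (s - mu \<theta>0) < cD * r0"
    and P0: "P \<theta>0" and Kc: "compact {\<theta> \<in> cball \<theta>0 r0. P \<theta>}"
  shows "\<exists>\<theta>s. \<theta>s \<in> Th \<and> P \<theta>s \<and> norm (\<theta>s - \<theta>0) \<le> r0 \<and>
           (\<forall>\<theta>. \<theta> \<in> Th \<and> P \<theta> \<longrightarrow> s \<bullet> \<theta> - A \<theta> \<le> s \<bullet> \<theta>s - A \<theta>s)"
proof -
  define K where "K = {\<theta> \<in> cball \<theta>0 r0. P \<theta>}"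
  have t0K': "\<theta>0 \<in> K" unfolding K_def using P0 r0 by (simp add: less_imp_le)
  then have ne: "K \<noteq> {}" by blast
  have "continuous_on (cball \<theta>0 r0) (\<lambda>\<theta>. s \<bullet> \<theta> - A \<theta>)"
    by (intro continuous_intros cont_A_r0)
  then have c: "continuous_on K (\<lambda>\<theta>. s \<bullet> \<theta> - A \<theta>)" by (rule continuous_on_subset) (auto simp: K_def)
  obtain \<theta>s where ts: "\<theta>s \<in> K" "\<forall>y\<in>K. s \<bullet> y - A y \<le> s \<bullet> \<theta>s - A \<theta>s"
    using continuous_attains_sup[OF Kc[folded K_def] ne c] by blast
  have tsTh: "\<theta>s \<in> Th" using ts(1) cball_r0_Th unfolding K_def by auto
  have t0K: "\<theta>0 \<in> K" unfolding K_def using P0 r0 by auto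
  have "\<forall>\<theta>. \<theta> \<in> Th \<and> P \<theta> \<longrightarrow> s \<bullet> \<theta> - A \<theta> \<le> s \<bullet> \<theta>s - A \<theta>s"
  proof (intro allI impI)
    fix \<theta> assume a: "\<theta> \<in> Th \<and> P \<theta>"
    show "s \<bullet> \<theta> - A \<theta> \<le> s \<bullet> \<theta>s - A \<theta>s"
    proof (cases "norm (\<theta> - \<theta>0) \<le> r0")
      case True
      then have "\<theta> \<in> K" unfolding K_def using a by (simp add: dist_norm norm_minus_commute)
      then show ?thesis using ts by blast
    next
      case False
      have "\<not> (s \<bullet> \<theta>0 - A \<theta>0 \<le> s \<bullet> \<theta> - A \<theta>)"
      proof
        assume "s \<bullet> \<theta>0 - A \<theta>0 \<le> s \<bullet> \<theta> - A \<theta>"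
        then have "norm (\<theta> - \<theta>0) \<le> norm (s - mu \<theta>0) / cD" using ell_close2 a d by blast
        also have "\<dots> < r0" using d cD_pos by (simp add: field_simps)
        finally show False using False by simp
      qed
      then have "s \<bullet> \<theta> - A \<theta> < s \<bullet> \<theta>0 - A \<theta>0" by simp
      also have "\<dots> \<le> s \<bullet> \<theta>s - A \<theta>s" using ts t0K by blast
      finally show ?thesis by simp
    qed
  qed
  moreover have "P \<theta>s" "norm (\<theta>s - \<theta>0) \<le> r0" using ts(1) unfolding K_def by (auto simp: dist_norm norm_minus_commute)
  ultimately show ?thesis using tsTh by blast
qed

lemma surj_mu:
  assumes d: "norm (s - mu \<theta>0) < cD * r0 / 2"
  shows "\<exists>\<theta>s. \<theta>s \<in> Th \<and> mu \<theta>s = s \<and> norm (\<theta>s - \<theta>0) \<le> norm (s - mu \<theta>0) / cD"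
proof -
  have "0 < cD * r0" using cD_pos r0 by simp
  then have d': "norm (s - mu \<theta>0) < cD * r0" using d by linarith
  have "{\<theta> \<in> cball \<theta>0 r0. True} = cball \<theta>0 r0" by blast
  then have "compact {\<theta> \<in> cball \<theta>0 r0. True}" by (simp only: compact_cball)
  then obtain \<theta>s where ts: "\<theta>s \<in> Th" "norm (\<theta>s - \<theta>0) \<le> r0"
      "\<forall>\<theta>. \<theta> \<in> Th \<and> True \<longrightarrow> s \<bullet> \<theta> - A \<theta> \<le> s \<bullet> \<theta>s - A \<theta>s"
    using glob_max[OF d', of "\<lambda>_. True"] by blast
  have close: "norm (\<theta>s - \<theta>0) \<le> norm (s - mu \<theta>0) / cD"
    using ell_close2[OF ts(1) _ d'] ts(3) th0 by blast
  have c1: "norm (\<theta>s - \<theta>0) * cD \<le> norm (s - mu \<theta>0)" using close cD_pos by (simp add: field_simps)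
  have "(2 * norm (\<theta>s - \<theta>0)) * cD \<le> r0 * cD" using c1 d by (simp add: field_simps)
  then have close2: "norm (\<theta>s - \<theta>0) \<le> r0 / 2" using cD_pos by (simp add: mult_le_cancel_right)
  define e where "e = s - mu \<theta>s"
  have foc: "e \<bullet> u \<le> C2 * (norm u)^2" if u: "norm u \<le> r0 / 2" for u
  proof -
    have nu: "norm u \<le> r0" using u r0 by simp
    have "norm (\<theta>s + u - \<theta>0) \<le> norm (\<theta>s - \<theta>0) + norm u"
      using norm_triangle_ineq[of "\<theta>s - \<theta>0" u] by (simp add: algebra_simps)
    also have "\<dots> \<le> 2 * r0" using close2 u r0 by simp
    finally have "\<theta>s + u \<in> Th" by (rule in_Th)
    then have "s \<bullet> (\<theta>s + u) - A (\<theta>s + u) \<le> s \<bullet> \<theta>s - A \<theta>s" using ts(3) by blast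
    then have "s \<bullet> u \<le> A (\<theta>s + u) - A \<theta>s" by (simp add: inner_add_right)
    moreover have "A (\<theta>s + u) - A \<theta>s - mu \<theta>s \<bullet> u \<le> C2 * (norm u)^2" using F2[OF ts(2) nu] .
    ultimately show ?thesis unfolding e_def by (simp add: inner_diff_left)
  qed
  have "e = 0"
  proof (rule ccontr)
    assume ne: "e \<noteq> 0"
    define \<epsilon> where "\<epsilon> = min (r0 / 2 / norm e) (1 / (2 * C2))"
    have ep: "0 < \<epsilon>" unfolding \<epsilon>_def using ne r0 C2_pos by simp
    have "norm (\<epsilon> *\<^sub>R e) = \<epsilon> * norm e" using ep by simp
    also have "\<dots> \<le> (r0 / 2 / norm e) * norm e" unfolding \<epsilon>_def by (intro mult_right_mono) auto
    also have "\<dots> = r0 / 2" using ne by simp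
    finally have "e \<bullet> (\<epsilon> *\<^sub>R e) \<le> C2 * (norm (\<epsilon> *\<^sub>R e))^2" by (rule foc)
    then have "\<epsilon> * (norm e)^2 \<le> C2 * (\<epsilon>^2 * (norm e)^2)" using ep
      by (simp add: power_mult_distrib power2_norm_eq_inner)
    then have "\<epsilon> * (norm e)^2 \<le> \<epsilon> * ((C2 * \<epsilon>) * (norm e)^2)" by (simp add: power2_eq_square algebra_simps)
    then have "(norm e)^2 \<le> (C2 * \<epsilon>) * (norm e)^2" using ep by simp
    moreover have "C2 * \<epsilon> \<le> 1/2" unfolding \<epsilon>_def using C2_pos by (simp add: min_def field_simps)
    moreover have "0 < (norm e)^2" using ne by simp
    ultimately have "(C2 * \<epsilon>) * (norm e)^2 \<le> (1/2) * (norm e)^2" by (intro mult_right_mono) auto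
    with \<open>(norm e)^2 \<le> (C2 * \<epsilon>) * (norm e)^2\<close> \<open>0 < (norm e)^2\<close> show False by linarith
  qed
  then have "mu \<theta>s = s" unfolding e_def by simp
  then show ?thesis using ts(1) close by blast
qed

end

context ef begin
lemma lik_eq:
  assumes th: "\<theta> \<in> Th" and n: "0 < n"
  shows "likelihood \<nu> t X n \<omega> \<theta> = exp (real n * (avg_stat t X n \<omega> \<bullet> \<theta> - A \<theta>))"
proof -
  have Zp: "0 < Z \<theta>" using Z_pos[OF th] .
  have d: "ef_density \<nu> t \<theta> x = exp (t x \<bullet> \<theta> - A \<theta>)" for x
    using dens_eq[OF th] Zp by (simp add: A_def exp_diff)
  have "likelihood \<nu> t X n \<omega> \<theta> = (\<Prod>i<n. exp (t (X i \<omega>) \<bullet> \<theta> - A \<theta>))"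
    unfolding likelihood_def d ..
  also have "\<dots> = exp (\<Sum>i<n. t (X i \<omega>) \<bullet> \<theta> - A \<theta>)" by (simp add: exp_sum)
  also have "(\<Sum>i<n. t (X i \<omega>) \<bullet> \<theta> - A \<theta>) = (\<Sum>i<n. t (X i \<omega>)) \<bullet> \<theta> - real n * A \<theta>"
    by (simp add: sum_subtractf inner_sum_left)
  also have "(\<Sum>i<n. t (X i \<omega>)) = real n *\<^sub>R avg_stat t X n \<omega>"
    unfolding avg_stat_def using n by simp
  finally show ?thesis by (simp add: algebra_simps)
qed
end

locale ef1 = ef0 +
  fixes Mu' Thv'
  assumes Mu'_closed: "closedin (top_of_set (fst ` mean_space \<nu> t)) Mu'"
    and Thv'_closed: "closedin (top_of_set (snd ` nat_param_space \<nu> t)) Thv'"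
    and psi0: "mixed_param \<nu> t \<theta>0 \<in> Mu' \<times> Thv'"
begin

definition Cu where "Cu = (SOME T. closed T \<and> Mu' = fst ` mean_space \<nu> t \<inter> T)"
definition Cv where "Cv = (SOME T. closed T \<and> Thv' = snd ` nat_param_space \<nu> t \<inter> T)"
lemma Cu: "closed Cu" "Mu' = fst ` mean_space \<nu> t \<inter> Cu"
proof -
  have "\<exists>T. closed T \<and> Mu' = fst ` mean_space \<nu> t \<inter> T" using Mu'_closed closedin_closed by blast
  then have "closed Cu \<and> Mu' = fst ` mean_space \<nu> t \<inter> Cu" unfolding Cu_def by (rule someI_ex)
  then show "closed Cu" "Mu' = fst ` mean_space \<nu> t \<inter> Cu" by auto
qed
lemma Cv: "closed Cv" "Thv' = snd ` nat_param_space \<nu> t \<inter> Cv"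
proof -
  have "\<exists>T. closed T \<and> Thv' = snd ` nat_param_space \<nu> t \<inter> T" using Thv'_closed closedin_closed by blast
  then have "closed Cv \<and> Thv' = snd ` nat_param_space \<nu> t \<inter> Cv" unfolding Cv_def by (rule someI_ex)
  then show "closed Cv" "Thv' = snd ` nat_param_space \<nu> t \<inter> Cv" by auto
qed

lemma mu_in_M: "\<theta> \<in> Th \<Longrightarrow> mu \<theta> \<in> mean_space \<nu> t" unfolding mean_space_def by simp

lemma Mu'_iff: assumes "\<theta> \<in> Th" shows "fst (mu \<theta>) \<in> Mu' \<longleftrightarrow> mu \<theta> \<in> fst -` Cu"
proof -
  have "fst (mu \<theta>) \<in> fst ` mean_space \<nu> t" using mu_in_M[OF assms] by (rule imageI)
  then show ?thesis using Cu(2) by auto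
qed
lemma Thv'_iff: "\<theta> \<in> Th \<Longrightarrow> snd \<theta> \<in> Thv' \<longleftrightarrow> \<theta> \<in> snd -` Cv"
  using Cv(2) by auto

lemma closed_fst_vimage: "closed (fst -` Cu)"
proof -
  have e: "fst -` Cu = Cu \<times> UNIV" by auto
  show ?thesis unfolding e by (rule closed_Times[OF Cu(1) closed_UNIV])
qed
lemma closed_snd_vimage: "closed (snd -` Cv)"
proof -
  have e: "snd -` Cv = UNIV \<times> Cv" by auto
  show ?thesis unfolding e by (rule closed_Times[OF closed_UNIV Cv(1)])
qed

lemma psi0': "fst (mu \<theta>0) \<in> Mu'" "snd \<theta>0 \<in> Thv'" using psi0 unfolding mixed_param_def by auto

lemma compact_feas:
  "compact {\<theta> \<in> cball \<theta>0 r0. fst (mu \<theta>) \<in> Mu' \<and> snd \<theta> \<in> Thv'}"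
proof -
  have "{\<theta> \<in> cball \<theta>0 r0. fst (mu \<theta>) \<in> Mu' \<and> snd \<theta> \<in> Thv'} = {\<theta> \<in> cball \<theta>0 r0. mu \<theta> \<in> fst -` Cu \<and> \<theta> \<in> snd -` Cv}"
    using Mu'_iff Thv'_iff cball_r0_Th by blast
  then show ?thesis using compact_K2[OF closed_fst_vimage closed_snd_vimage] by simp
qed

lemma compact_feas_v:
  "compact {\<theta> \<in> cball \<theta>0 r0. snd \<theta> \<in> Thv'}"
proof -
  have "{\<theta> \<in> cball \<theta>0 r0. snd \<theta> \<in> Thv'} = {\<theta> \<in> cball \<theta>0 r0. mu \<theta> \<in> UNIV \<and> \<theta> \<in> snd -` Cv}"
    using Thv'_iff cball_r0_Th by blast
  then show ?thesis using compact_K2[OF closed_UNIV closed_snd_vimage] by simp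
qed

lemma compact_feas_u:
  "compact {\<theta> \<in> cball \<theta>0 r0. fst (mu \<theta>) \<in> Mu'}"
proof -
  have "{\<theta> \<in> cball \<theta>0 r0. fst (mu \<theta>) \<in> Mu'} = {\<theta> \<in> cball \<theta>0 r0. mu \<theta> \<in> fst -` Cu}"
    using Mu'_iff cball_r0_Th by blast
  then show ?thesis using compact_K[OF closed_fst_vimage] by simp
qed

lemma norm_pair_diff: "norm ((a, b) - (c, d)) \<le> norm (a - c) + norm (b - d)"
  using norm_Pair_le[of "a - c" "b - d"] by simp

lemma norm_fst_diff: "norm (fst u - fst v) \<le> norm (u - v)"
proof -
  have e: "(fst u - fst v, snd u - snd v) = u - v" by (simp add: prod_eq_iff)
  show ?thesis using norm_fst_le[of "fst u - fst v" "snd u - snd v"] unfolding e .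
qed

lemma norm_snd_diff: "norm (snd u - snd v) \<le> norm (u - v)"
proof -
  have e: "(fst u - fst v, snd u - snd v) = u - v" by (simp add: prod_eq_iff)
  show ?thesis using norm_snd_le[of "snd u - snd v" "fst u - fst v"] unfolding e .
qed

lemma mle_bound:
  assumes n: "0 < n" and d: "norm (s - mu \<theta>0) < cD * r0"
    and Lk: "\<And>\<theta>. \<theta> \<in> Th \<Longrightarrow> Lk \<theta> = exp (real n * (s \<bullet> \<theta> - A \<theta>))"
    and hyp: "(\<exists>\<theta>. is_arg_max Lk (\<lambda>\<theta>. \<theta> \<in> Th \<and> mixed_param \<nu> t \<theta> \<in> Mu' \<times> Thv') \<theta>)
          \<Longrightarrow> is_arg_max Lk (\<lambda>\<theta>. \<theta> \<in> Th \<and> mixed_param \<nu> t \<theta> \<in> Mu' \<times> Thv') \<theta>t"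
  shows "\<theta>t \<in> Th" "norm (\<theta>t - \<theta>0) \<le> norm (s - mu \<theta>0) / cD"
proof -
  define Fs where "Fs \<theta> = (\<theta> \<in> Th \<and> mixed_param \<nu> t \<theta> \<in> Mu' \<times> Thv')" for \<theta>
  have Fs_iff: "Fs \<theta> \<longleftrightarrow> \<theta> \<in> Th \<and> (fst (mu \<theta>) \<in> Mu' \<and> snd \<theta> \<in> Thv')" for \<theta>
    unfolding Fs_def mixed_param_def by auto
  obtain \<theta>s where ts: "\<theta>s \<in> Th" "fst (mu \<theta>s) \<in> Mu' \<and> snd \<theta>s \<in> Thv'"
      "\<forall>\<theta>. \<theta> \<in> Th \<and> (fst (mu \<theta>) \<in> Mu' \<and> snd \<theta> \<in> Thv') \<longrightarrow> s \<bullet> \<theta> - A \<theta> \<le> s \<bullet> \<theta>s - A \<theta>s"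
    using glob_max[OF d, of "\<lambda>\<theta>. fst (mu \<theta>) \<in> Mu' \<and> snd \<theta> \<in> Thv'"] psi0' compact_feas by blast
  have "is_arg_max Lk Fs \<theta>s"
    unfolding is_arg_max_def
  proof (intro conjI notI)
    show "Fs \<theta>s" using ts Fs_iff by blast
    assume "\<exists>y. Fs y \<and> Lk \<theta>s < Lk y"
    then obtain y where y: "Fs y" "Lk \<theta>s < Lk y" by blast
    have "s \<bullet> y - A y \<le> s \<bullet> \<theta>s - A \<theta>s" using ts(3) y(1) Fs_iff by blast
    then have "real n * (s \<bullet> y - A y) \<le> real n * (s \<bullet> \<theta>s - A \<theta>s)" by (intro mult_left_mono) auto
    then have "Lk y \<le> Lk \<theta>s" using Lk ts(1) y(1) Fs_iff by simp
    then show False using y(2) by simp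
  qed
  then have am: "is_arg_max Lk Fs \<theta>t" using hyp unfolding Fs_def by blast
  have F0: "Fs \<theta>0" using psi0 th0 unfolding Fs_def by simp
  have Ft: "Fs \<theta>t" using am unfolding is_arg_max_def by blast
  have nb: "\<not> Lk \<theta>t < Lk \<theta>0" using am F0 unfolding is_arg_max_def by blast
  show tTh: "\<theta>t \<in> Th" using Ft Fs_def by simp
  have "exp (real n * (s \<bullet> \<theta>0 - A \<theta>0)) \<le> exp (real n * (s \<bullet> \<theta>t - A \<theta>t))"
    using nb Lk[OF tTh] Lk[OF th0] by simp
  then have "real n * (s \<bullet> \<theta>0 - A \<theta>0) \<le> real n * (s \<bullet> \<theta>t - A \<theta>t)" by simp
  then have "s \<bullet> \<theta>0 - A \<theta>0 \<le> s \<bullet> \<theta>t - A \<theta>t" using n by simp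
  then show "norm (\<theta>t - \<theta>0) \<le> norm (s - mu \<theta>0) / cD" using ell_close2[OF tTh _ d] by blast
qed

lemma dual1_bound:
  assumes d: "norm (s - mu \<theta>0) < cD * r0 / 2"
    and hyp: "(\<exists>\<theta>. is_arg_min (KL_div \<nu> t s) (\<lambda>\<theta>. snd \<theta> \<in> Thv') \<theta>)
          \<Longrightarrow> is_arg_min (KL_div \<nu> t s) (\<lambda>\<theta>. snd \<theta> \<in> Thv') \<theta>h"
  shows "\<theta>h \<in> Th" "norm (\<theta>h - \<theta>0) \<le> norm (s - mu \<theta>0) / cD"
proof -
  have "0 < cD * r0" using cD_pos r0 by simp
  then have d': "norm (s - mu \<theta>0) < cD * r0" using d by linarith
  obtain \<theta>s where ts: "\<theta>s \<in> Th" "mu \<theta>s = s" using surj_mu[OF d] by blast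
  have KLi: "KL_div \<nu> t s \<theta> = ereal (A \<theta> - A \<theta>s - s \<bullet> (\<theta> - \<theta>s))" if "\<theta> \<in> Th" for \<theta>
    using KL_in[OF ts(1) that] ts(2) by simp
  have KLo: "KL_div \<nu> t s \<theta> = \<infinity>" if "\<theta> \<notin> Th" for \<theta>
    using KL_out[OF ts(1) that] ts(2) by simp
  obtain \<theta>m where tm: "\<theta>m \<in> Th" "snd \<theta>m \<in> Thv'"
      "\<forall>\<theta>. \<theta> \<in> Th \<and> snd \<theta> \<in> Thv' \<longrightarrow> s \<bullet> \<theta> - A \<theta> \<le> s \<bullet> \<theta>m - A \<theta>m"
    using glob_max[OF d', of "\<lambda>\<theta>. snd \<theta> \<in> Thv'"] psi0' compact_feas_v by blast
  have "is_arg_min (KL_div \<nu> t s) (\<lambda>\<theta>. snd \<theta> \<in> Thv') \<theta>m"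
    unfolding is_arg_min_def
  proof (intro conjI notI)
    show "snd \<theta>m \<in> Thv'" by (rule tm(2))
    assume "\<exists>y. snd y \<in> Thv' \<and> KL_div \<nu> t s y < KL_div \<nu> t s \<theta>m"
    then obtain y where y: "snd y \<in> Thv'" "KL_div \<nu> t s y < KL_div \<nu> t s \<theta>m" by blast
    show False
    proof (cases "y \<in> Th")
      case True
      have "s \<bullet> y - A y \<le> s \<bullet> \<theta>m - A \<theta>m" using tm(3) True y(1) by blast
      then have "A \<theta>m - A \<theta>s - s \<bullet> (\<theta>m - \<theta>s) \<le> A y - A \<theta>s - s \<bullet> (y - \<theta>s)" by (simp add: inner_diff_right)
      then show False using y(2) KLi[OF True] KLi[OF tm(1)] by simp
    next
      case False
      then show False using y(2) KLo by simp
    qed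
  qed
  then have am: "is_arg_min (KL_div \<nu> t s) (\<lambda>\<theta>. snd \<theta> \<in> Thv') \<theta>h" using hyp by blast
  then have nb: "\<not> KL_div \<nu> t s \<theta>0 < KL_div \<nu> t s \<theta>h" using psi0' unfolding is_arg_min_def by blast
  show hTh: "\<theta>h \<in> Th"
  proof (rule ccontr)
    assume "\<theta>h \<notin> Th"
    then show False using nb KLo KLi[OF th0] by simp
  qed
  have "A \<theta>h - A \<theta>s - s \<bullet> (\<theta>h - \<theta>s) \<le> A \<theta>0 - A \<theta>s - s \<bullet> (\<theta>0 - \<theta>s)"
    using nb KLi[OF hTh] KLi[OF th0] by simp
  then have "s \<bullet> \<theta>0 - A \<theta>0 \<le> s \<bullet> \<theta>h - A \<theta>h" by (simp add: inner_diff_right)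
  then show "norm (\<theta>h - \<theta>0) \<le> norm (s - mu \<theta>0) / cD" using ell_close2[OF hTh _ d'] by blast
qed

end

context ef1 begin

lemma dual2_bound:
  assumes hTh: "\<theta>h \<in> Th" and hr: "norm (\<theta>h - \<theta>0) \<le> \<rho>" and rr: "\<rho> \<le> r0"
    and small: "(2 * C2 + L0) * \<rho> < cD * r0"
    and hyp: "(\<exists>\<mu>. is_arg_min (\<lambda>\<mu>. KL_div \<nu> t \<mu> \<theta>h) (\<lambda>\<mu>. \<mu> \<in> mean_space \<nu> t \<and> fst \<mu> \<in> Mu') \<mu>)
          \<Longrightarrow> is_arg_min (\<lambda>\<mu>. KL_div \<nu> t \<mu> \<theta>h) (\<lambda>\<mu>. \<mu> \<in> mean_space \<nu> t \<and> fst \<mu> \<in> Mu') \<mu>c"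
  shows "\<exists>\<theta>'. \<theta>' \<in> Th \<and> \<mu>c = mu \<theta>' \<and> norm (mu \<theta>' - mu \<theta>0) \<le> (2 * C2 + L0) * \<rho>
            \<and> norm (\<theta>' - \<theta>0) \<le> (2 * C2 + L0) * \<rho> / cD"
proof -
  have rho0: "0 \<le> \<rho>" using hr norm_ge_zero order_trans by blast
  have hr0: "norm (\<theta>h - \<theta>0) \<le> r0" using hr rr by simp
  define Bg where "Bg \<theta>' = A \<theta>h - A \<theta>' - mu \<theta>' \<bullet> (\<theta>h - \<theta>')" for \<theta>'
  have KLm: "KL_div \<nu> t (mu \<theta>') \<theta>h = ereal (Bg \<theta>')" if "\<theta>' \<in> Th" for \<theta>'
    unfolding Bg_def using KL_in[OF that hTh] .
  have LB: "(mu \<theta>' - mu \<theta>h) \<bullet> u - C2 * (norm u)^2 \<le> Bg \<theta>'" if th': "\<theta>' \<in> Th" and u: "norm u \<le> r0" for \<theta>' u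
  proof -
    have "norm (\<theta>h + u - \<theta>0) \<le> norm (\<theta>h - \<theta>0) + norm u"
      using norm_triangle_ineq[of "\<theta>h - \<theta>0" u] by (simp add: algebra_simps)
    also have "\<dots> \<le> 2 * r0" using hr0 u by simp
    finally have thu: "\<theta>h + u \<in> Th" by (rule in_Th)
    have f1: "A \<theta>' + mu \<theta>' \<bullet> (\<theta>h + u - \<theta>') \<le> A (\<theta>h + u)" by (rule F1[OF th' thu])
    have f2: "A (\<theta>h + u) - A \<theta>h - mu \<theta>h \<bullet> u \<le> C2 * (norm u)^2" by (rule F2[OF hr0 u])
    show ?thesis using f1 f2 unfolding Bg_def by (simp add: inner_diff_left inner_diff_right inner_add_right)
  qed
  have LBcor: "norm (mu \<theta>' - mu \<theta>h) \<le> 2 * C2 * \<rho>" if th': "\<theta>' \<in> Th" and b: "Bg \<theta>' \<le> C2 * \<rho>^2" for \<theta>'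
  proof (rule ccontr)
    define D where "D = mu \<theta>' - mu \<theta>h"
    assume "\<not> norm (mu \<theta>' - mu \<theta>h) \<le> 2 * C2 * \<rho>"
    then have big: "2 * C2 * \<rho> < norm D" unfolding D_def by simp
    have C2p: "0 < C2" by (rule C2_pos)
    have "0 \<le> 2 * C2 * \<rho>" using C2p rho0 by simp
    then have "0 < norm D" using big by linarith
    then have Dne: "D \<noteq> 0" by auto
    have dd: "D \<bullet> D = norm D * norm D" by (simp add: dot_square_norm power2_eq_square)
    show False
    proof (cases "norm D \<le> 2 * C2 * r0")
      case True
      define u where "u = (1 / (2 * C2)) *\<^sub>R D"
      have nu: "norm u = norm D / (2 * C2)" unfolding u_def using C2p by simp
      have "norm u \<le> r0" unfolding nu using True C2p by (simp add: field_simps)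
      then have l: "D \<bullet> u - C2 * (norm u)^2 \<le> Bg \<theta>'" using LB[OF th'] unfolding D_def by blast
      have "D \<bullet> u - C2 * (norm u)^2 = (norm D)^2 / (4 * C2)"
        unfolding nu unfolding u_def using C2p dd by (simp add: power_divide field_simps power2_eq_square)
      moreover have "(2 * C2 * \<rho>)^2 < (norm D)^2" using big rho0 C2p by (intro power_strict_mono) auto
      then have "C2 * \<rho>^2 < (norm D)^2 / (4 * C2)" using C2p by (simp add: field_simps power2_eq_square)
      ultimately show False using l b by simp
    next
      case False
      define u where "u = (r0 / norm D) *\<^sub>R D"
      have nu: "norm u = r0" unfolding u_def using Dne r0 by simp
      then have "norm u \<le> r0" by simp
      then have l: "D \<bullet> u - C2 * (norm u)^2 \<le> Bg \<theta>'" using LB[OF th'] unfolding D_def by blast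
      have e: "D \<bullet> u = r0 * norm D" unfolding u_def using Dne dd by simp
      have "2 * C2 * r0 * r0 < norm D * r0" using False r0 by (intro mult_strict_right_mono) auto
      moreover have "\<rho>^2 \<le> r0^2" using rho0 rr by (intro power_mono) auto
      then have "C2 * \<rho>^2 \<le> C2 * r0^2" using C2p by simp
      ultimately have "C2 * \<rho>^2 < D \<bullet> u - C2 * (norm u)^2" unfolding e nu by (simp add: power2_eq_square algebra_simps)
      then show False using l b by simp
    qed
  qed
  have B0: "Bg \<theta>0 \<le> C2 * \<rho>^2"
  proof -
    have "A (\<theta>0 + (\<theta>h - \<theta>0)) - A \<theta>0 - mu \<theta>0 \<bullet> (\<theta>h - \<theta>0) \<le> C2 * (norm (\<theta>h - \<theta>0))^2"
      using F2[of \<theta>0 "\<theta>h - \<theta>0"] hr0 r0 by simp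
    also have "\<dots> \<le> C2 * \<rho>^2" using hr C2_pos by (intro mult_left_mono power_mono) auto
    finally show ?thesis unfolding Bg_def by simp
  qed
  have muh: "norm (mu \<theta>h - mu \<theta>0) \<le> L0 * \<rho>"
  proof -
    have "norm (mu \<theta>h - mu \<theta>0) \<le> L0 * norm (\<theta>h - \<theta>0)" using mu_lip[of \<theta>h \<theta>0] hr0 r0 by simp
    also have "\<dots> \<le> L0 * \<rho>" using hr L0_nonneg by (intro mult_left_mono) auto
    finally show ?thesis .
  qed
  have closeB: "norm (mu \<theta>' - mu \<theta>0) \<le> (2 * C2 + L0) * \<rho> \<and> norm (\<theta>' - \<theta>0) \<le> (2 * C2 + L0) * \<rho> / cD"
    if th': "\<theta>' \<in> Th" and b: "Bg \<theta>' \<le> Bg \<theta>0" for \<theta>'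
  proof -
    have "norm (mu \<theta>' - mu \<theta>h) \<le> 2 * C2 * \<rho>" using LBcor[OF th'] b B0 by simp
    then have m: "norm (mu \<theta>' - mu \<theta>0) \<le> (2 * C2 + L0) * \<rho>"
      using norm_triangle_ineq[of "mu \<theta>' - mu \<theta>h" "mu \<theta>h - mu \<theta>0"] muh by (simp add: algebra_simps)
    then have "norm (mu \<theta>' - mu \<theta>0) < cD * r0" using small by simp
    then have "norm (\<theta>' - \<theta>0) \<le> norm (mu \<theta>' - mu \<theta>0) / cD" by (rule inv_lip[OF th'])
    also have "\<dots> \<le> (2 * C2 + L0) * \<rho> / cD" using m cD_pos by (simp add: divide_right_mono)
    finally show ?thesis using m by simp
  qed
  have lt_r0: "(2 * C2 + L0) * \<rho> / cD < r0" using small cD_pos by (simp add: field_simps)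
  define K where "K = {\<theta> \<in> cball \<theta>0 r0. fst (mu \<theta>) \<in> Mu'}"
  have t0K: "\<theta>0 \<in> K" unfolding K_def using psi0' r0 by (simp add: less_imp_le)
  then have neK: "K \<noteq> {}" by blast
  have cK: "compact K" unfolding K_def by (rule compact_feas_u)
  have "continuous_on (cball \<theta>0 r0) Bg" unfolding Bg_def[abs_def]
    by (intro continuous_intros cont_A_r0 cont_mu_r0)
  then have cB: "continuous_on K Bg" by (rule continuous_on_subset) (auto simp: K_def)
  obtain \<theta>m where tm: "\<theta>m \<in> K" "\<forall>y\<in>K. Bg \<theta>m \<le> Bg y"
    using continuous_attains_inf[OF cK neK cB] by blast
  have tmTh: "\<theta>m \<in> Th" using tm(1) cball_r0_Th unfolding K_def by auto
  define Fm where "Fm \<mu> = (\<mu> \<in> mean_space \<nu> t \<and> fst \<mu> \<in> Mu')" for \<mu>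
  have inM: "\<exists>\<theta>'. \<theta>' \<in> Th \<and> \<mu> = mu \<theta>'" if "\<mu> \<in> mean_space \<nu> t" for \<mu>
    using that unfolding mean_space_def by auto
  have "is_arg_min (\<lambda>\<mu>. KL_div \<nu> t \<mu> \<theta>h) Fm (mu \<theta>m)"
    unfolding is_arg_min_def
  proof (intro conjI notI)
    show "Fm (mu \<theta>m)" unfolding Fm_def using mu_in_M[OF tmTh] tm(1) K_def by auto
    assume "\<exists>y. Fm y \<and> KL_div \<nu> t y \<theta>h < KL_div \<nu> t (mu \<theta>m) \<theta>h"
    then obtain y where y: "Fm y" "KL_div \<nu> t y \<theta>h < KL_div \<nu> t (mu \<theta>m) \<theta>h" by blast
    obtain \<theta>' where t': "\<theta>' \<in> Th" "y = mu \<theta>'" using inM y(1) unfolding Fm_def by blast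
    have lt: "Bg \<theta>' < Bg \<theta>m" using y(2) KLm[OF t'(1)] KLm[OF tmTh] t'(2) by simp
    show False
    proof (cases "norm (\<theta>' - \<theta>0) \<le> r0")
      case True
      then have "\<theta>' \<in> K" unfolding K_def using y(1) t'(2) Fm_def by (simp add: dist_norm norm_minus_commute)
      then show False using tm(2) lt by force
    next
      case False
      have "Bg \<theta>m \<le> Bg \<theta>0" using tm(2) t0K by blast
      then have "Bg \<theta>' \<le> Bg \<theta>0" using lt by simp
      then have "norm (\<theta>' - \<theta>0) \<le> (2 * C2 + L0) * \<rho> / cD" using closeB[OF t'(1)] by blast
      then show False using False lt_r0 by simp
    qed
  qed
  then have am: "is_arg_min (\<lambda>\<mu>. KL_div \<nu> t \<mu> \<theta>h) Fm \<mu>c" using hyp unfolding Fm_def by blast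
  have F0: "Fm (mu \<theta>0)" unfolding Fm_def using mu_in_M[OF th0] psi0' by simp
  have Fc: "Fm \<mu>c" using am unfolding is_arg_min_def by blast
  have nb: "\<not> KL_div \<nu> t (mu \<theta>0) \<theta>h < KL_div \<nu> t \<mu>c \<theta>h" using am F0 unfolding is_arg_min_def by blast
  obtain \<theta>' where t': "\<theta>' \<in> Th" "\<mu>c = mu \<theta>'" using inM Fc unfolding Fm_def by blast
  have "Bg \<theta>' \<le> Bg \<theta>0" using nb KLm[OF t'(1)] KLm[OF th0] t'(2) by simp
  then show ?thesis using closeB[OF t'(1)] t' by blast
qed

definition \<delta>0 where "\<delta>0 = cD * r0 / (4 * (1 + (2 * C2 + L0) / cD))"

lemma \<delta>0_aux: fixes p k :: real assumes "0 < p" "0 \<le> k"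
  shows "0 < p / (4 * (1 + k))" "p / (4 * (1 + k)) \<le> p / 4" "k * (p / (4 * (1 + k))) \<le> p / 4"
proof -
  have a: "0 < 4 * (1 + k)" using assms by simp
  show "0 < p / (4 * (1 + k))" using assms a by simp
  show "p / (4 * (1 + k)) \<le> p / 4" using assms by (simp add: field_simps)
  have "k * p \<le> (1 + k) * p" using assms by simp
  then show "k * (p / (4 * (1 + k))) \<le> p / 4" using assms a by (simp add: field_simps)
qed

lemma \<delta>0: "0 < \<delta>0" "\<delta>0 \<le> cD * r0 / 4" "(2 * C2 + L0) / cD * \<delta>0 \<le> cD * r0 / 4"
proof -
  have q: "0 \<le> (2 * C2 + L0) / cD" using C2_pos L0_nonneg cD_pos by simp
  have p: "0 < cD * r0" using cD_pos r0 by simp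
  show "0 < \<delta>0" "\<delta>0 \<le> cD * r0 / 4" "(2 * C2 + L0) / cD * \<delta>0 \<le> cD * r0 / 4"
    unfolding \<delta>0_def using \<delta>0_aux[OF p q] by auto
qed

lemma det1:
  assumes d: "norm (s - mu \<theta>0) \<le> \<delta>0"
  shows "norm ((fst s, snd (canon_of_mean \<nu> t s)) - mixed_param \<nu> t \<theta>0) \<le> (1 + 1 / cD) * norm (s - mu \<theta>0)"
proof -
  have p: "0 < cD * r0" using cD_pos r0 by simp
  have "norm (s - mu \<theta>0) < cD * r0 / 2" using d \<delta>0(2) p by linarith
  then obtain \<theta>s where ts: "\<theta>s \<in> Th" "mu \<theta>s = s" "norm (\<theta>s - \<theta>0) \<le> norm (s - mu \<theta>0) / cD"
    using surj_mu by blast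
  have c: "canon_of_mean \<nu> t s = \<theta>s" using canon_eq[OF ts(1)] ts(2) by simp
  have "norm ((fst s, snd \<theta>s) - mixed_param \<nu> t \<theta>0) \<le> norm (fst s - fst (mu \<theta>0)) + norm (snd \<theta>s - snd \<theta>0)"
    unfolding mixed_param_def by (rule norm_pair_diff)
  also have "\<dots> \<le> norm (s - mu \<theta>0) + norm (\<theta>s - \<theta>0)"
    using norm_fst_diff[of s "mu \<theta>0"] norm_snd_diff[of \<theta>s \<theta>0] by simp
  also have "\<dots> \<le> (1 + 1 / cD) * norm (s - mu \<theta>0)" using ts(3) by (simp add: algebra_simps)
  finally show ?thesis unfolding c .
qed

end

context ef1 begin

lemma det_small:
  assumes d: "norm (s - mu \<theta>0) \<le> \<delta>0"
  shows "norm (s - mu \<theta>0) < cD * r0 / 2" "norm (s - mu \<theta>0) < cD * r0"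
    "norm (s - mu \<theta>0) / cD \<le> r0 / 4"
    "(2 * C2 + L0) * (norm (s - mu \<theta>0) / cD) < cD * r0"
proof -
  have p: "0 < cD * r0" using cD_pos r0 by simp
  show a: "norm (s - mu \<theta>0) < cD * r0 / 2" using d \<delta>0(2) p by linarith
  then show "norm (s - mu \<theta>0) < cD * r0" using p by linarith
  have "norm (s - mu \<theta>0) \<le> cD * r0 / 4" using d \<delta>0(2) by linarith
  then show "norm (s - mu \<theta>0) / cD \<le> r0 / 4" using cD_pos by (simp add: field_simps)
  have q: "0 \<le> (2 * C2 + L0) / cD" using C2_pos L0_nonneg cD_pos by simp
  have "(2 * C2 + L0) / cD * norm (s - mu \<theta>0) \<le> (2 * C2 + L0) / cD * \<delta>0"
    using d q by (intro mult_left_mono) auto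
  also have "\<dots> \<le> cD * r0 / 4" by (rule \<delta>0(3))
  finally have "(2 * C2 + L0) / cD * norm (s - mu \<theta>0) < cD * r0" using p by linarith
  then show "(2 * C2 + L0) * (norm (s - mu \<theta>0) / cD) < cD * r0" by (simp add: field_simps)
qed

lemma det2:
  assumes n: "0 < n" and d: "norm (s - mu \<theta>0) \<le> \<delta>0"
    and Lk: "\<And>\<theta>. \<theta> \<in> Th \<Longrightarrow> Lk \<theta> = exp (real n * (s \<bullet> \<theta> - A \<theta>))"
    and hyp: "(\<exists>\<theta>. is_arg_max Lk (\<lambda>\<theta>. \<theta> \<in> Th \<and> mixed_param \<nu> t \<theta> \<in> Mu' \<times> Thv') \<theta>)
          \<Longrightarrow> is_arg_max Lk (\<lambda>\<theta>. \<theta> \<in> Th \<and> mixed_param \<nu> t \<theta> \<in> Mu' \<times> Thv') \<theta>t"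
  shows "norm (mixed_param \<nu> t \<theta>t - mixed_param \<nu> t \<theta>0) \<le> (L0 + 1) / cD * norm (s - mu \<theta>0)"
proof -
  note sm = det_small[OF d]
  have tTh: "\<theta>t \<in> Th" and cl: "norm (\<theta>t - \<theta>0) \<le> norm (s - mu \<theta>0) / cD"
    using mle_bound[OF n sm(2) Lk hyp] by auto
  have cl2: "norm (\<theta>t - \<theta>0) \<le> 2 * r0" using cl sm(3) r0(1) by linarith
  have "norm (mixed_param \<nu> t \<theta>t - mixed_param \<nu> t \<theta>0) \<le> norm (fst (mu \<theta>t) - fst (mu \<theta>0)) + norm (snd \<theta>t - snd \<theta>0)"
    unfolding mixed_param_def by (rule norm_pair_diff)
  also have "\<dots> \<le> norm (mu \<theta>t - mu \<theta>0) + norm (\<theta>t - \<theta>0)"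
    using norm_fst_diff[of "mu \<theta>t" "mu \<theta>0"] norm_snd_diff[of \<theta>t \<theta>0] by simp
  also have "\<dots> \<le> L0 * norm (\<theta>t - \<theta>0) + norm (\<theta>t - \<theta>0)"
    using mu_lip[OF cl2, of \<theta>0] r0 by simp
  also have "\<dots> = (L0 + 1) * norm (\<theta>t - \<theta>0)" by (simp add: algebra_simps)
  also have "\<dots> \<le> (L0 + 1) * (norm (s - mu \<theta>0) / cD)" using cl L0_nonneg by (intro mult_left_mono) auto
  finally show ?thesis by simp
qed

lemma det3:
  assumes d: "norm (s - mu \<theta>0) \<le> \<delta>0"
    and hyp1: "(\<exists>\<theta>. is_arg_min (KL_div \<nu> t s) (\<lambda>\<theta>. snd \<theta> \<in> Thv') \<theta>)
          \<Longrightarrow> is_arg_min (KL_div \<nu> t s) (\<lambda>\<theta>. snd \<theta> \<in> Thv') \<theta>h"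
    and hyp2: "(\<exists>\<mu>. is_arg_min (\<lambda>\<mu>. KL_div \<nu> t \<mu> \<theta>h) (\<lambda>\<mu>. \<mu> \<in> mean_space \<nu> t \<and> fst \<mu> \<in> Mu') \<mu>)
          \<Longrightarrow> is_arg_min (\<lambda>\<mu>. KL_div \<nu> t \<mu> \<theta>h) (\<lambda>\<mu>. \<mu> \<in> mean_space \<nu> t \<and> fst \<mu> \<in> Mu') \<mu>c"
  shows "norm ((fst \<mu>c, snd (canon_of_mean \<nu> t \<mu>c)) - mixed_param \<nu> t \<theta>0)
           \<le> (2 * C2 + L0) * (1 + 1 / cD) / cD * norm (s - mu \<theta>0)"
proof -
  note sm = det_small[OF d]
  define \<rho> where "\<rho> = norm (s - mu \<theta>0) / cD"
  have hTh: "\<theta>h \<in> Th" and hr: "norm (\<theta>h - \<theta>0) \<le> \<rho>"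
    using dual1_bound[OF sm(1) hyp1] unfolding \<rho>_def by auto
  have rr: "\<rho> \<le> r0" using sm(3) r0(1) unfolding \<rho>_def by linarith
  have small: "(2 * C2 + L0) * \<rho> < cD * r0" using sm(4) unfolding \<rho>_def .
  obtain \<theta>' where t': "\<theta>' \<in> Th" "\<mu>c = mu \<theta>'" "norm (mu \<theta>' - mu \<theta>0) \<le> (2 * C2 + L0) * \<rho>"
      "norm (\<theta>' - \<theta>0) \<le> (2 * C2 + L0) * \<rho> / cD"
    using dual2_bound[OF hTh hr rr small hyp2] by blast
  have c: "canon_of_mean \<nu> t \<mu>c = \<theta>'" using canon_eq[OF t'(1)] t'(2) by simp
  have "norm ((fst \<mu>c, snd \<theta>') - mixed_param \<nu> t \<theta>0) \<le> norm (fst \<mu>c - fst (mu \<theta>0)) + norm (snd \<theta>' - snd \<theta>0)"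
    unfolding mixed_param_def by (rule norm_pair_diff)
  also have "\<dots> \<le> norm (mu \<theta>' - mu \<theta>0) + norm (\<theta>' - \<theta>0)"
    using norm_fst_diff[of "\<mu>c" "mu \<theta>0"] norm_snd_diff[of \<theta>' \<theta>0] t'(2) by simp
  also have "\<dots> \<le> (2 * C2 + L0) * \<rho> + (2 * C2 + L0) * \<rho> / cD" using t'(3,4) by simp
  also have "\<dots> = (2 * C2 + L0) * (1 + 1 / cD) / cD * norm (s - mu \<theta>0)"
    unfolding \<rho>_def using cD_pos by (simp add: field_simps)
  finally show ?thesis unfolding c .
qed

end

lemma bip_from:
  fixes Y :: "nat \<Rightarrow> 'w \<Rightarrow> 'c::real_normed_vector" and S :: "nat \<Rightarrow> 'w \<Rightarrow> 'd::real_normed_vector"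
  assumes K: "0 \<le> K" and dz: "0 < dz"
    and prob: "\<And>\<epsilon>. \<epsilon> > 0 \<Longrightarrow> \<exists>C0>0. \<forall>n>0. \<exists>E\<in>sets P. measure P E < \<epsilon> \<and>
                 (\<forall>\<omega>\<in>space P - E. norm (S n \<omega>) \<le> C0 / sqrt (real n))"
    and det: "\<And>n \<omega>. 0 < n \<Longrightarrow> \<omega> \<in> space P \<Longrightarrow> norm (S n \<omega>) \<le> dz \<Longrightarrow>
                 norm (Y n \<omega>) \<le> sqrt (real n) * K * norm (S n \<omega>)"
  shows "bounded_in_prob P Y"
  unfolding bounded_in_prob_def
proof (intro allI impI)
  fix \<epsilon> :: real assume ep: "\<epsilon> > 0"
  obtain C0 where C0: "C0 > 0" "\<forall>n>0. \<exists>E\<in>sets P. measure P E < \<epsilon> \<and>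
                 (\<forall>\<omega>\<in>space P - E. norm (S n \<omega>) \<le> C0 / sqrt (real n))"
    using prob[OF ep] by blast
  define N where "N = nat \<lceil>(C0 / dz)^2\<rceil> + 1"
  have "\<forall>n\<ge>N. \<exists>E\<in>sets P. {\<omega> \<in> space P. K * C0 < norm (Y n \<omega>)} \<subseteq> E \<and> measure P E < \<epsilon>"
  proof (intro allI impI)
    fix n assume nN: "N \<le> n"
    then have n0: "0 < n" unfolding N_def by simp
    have "(C0 / dz)^2 \<le> real n" using nN unfolding N_def by linarith
    then have "sqrt ((C0 / dz)^2) \<le> sqrt (real n)" by (rule real_sqrt_le_mono)
    then have sq: "C0 / dz \<le> sqrt (real n)" using C0 dz by simp
    have sqp: "0 < sqrt (real n)" using n0 by simp
    have cd: "C0 / sqrt (real n) \<le> dz" using sq sqp dz by (simp add: field_simps)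
    obtain E where E: "E \<in> sets P" "measure P E < \<epsilon>" "\<forall>\<omega>\<in>space P - E. norm (S n \<omega>) \<le> C0 / sqrt (real n)"
      using C0(2) n0 by blast
    have "{\<omega> \<in> space P. K * C0 < norm (Y n \<omega>)} \<subseteq> E"
    proof
      fix \<omega> assume w: "\<omega> \<in> {\<omega> \<in> space P. K * C0 < norm (Y n \<omega>)}"
      show "\<omega> \<in> E"
      proof (rule ccontr)
        assume "\<omega> \<notin> E"
        then have s: "norm (S n \<omega>) \<le> C0 / sqrt (real n)" using E(3) w by blast
        then have "norm (Y n \<omega>) \<le> sqrt (real n) * K * norm (S n \<omega>)" using det[OF n0] w cd by auto
        also have "\<dots> \<le> sqrt (real n) * K * (C0 / sqrt (real n))"
          using s K sqp by (intro mult_left_mono) auto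
        also have "\<dots> = K * C0" using sqp by simp
        finally show False using w by simp
      qed
    qed
    then show "\<exists>E\<in>sets P. {\<omega> \<in> space P. K * C0 < norm (Y n \<omega>)} \<subseteq> E \<and> measure P E < \<epsilon>" using E by blast
  qed
  then show "\<exists>C N. \<forall>n\<ge>N. \<exists>E\<in>sets P. {\<omega> \<in> space P. C < norm (Y n \<omega>)} \<subseteq> E \<and> measure P E < \<epsilon>" by blast
qed

locale efP = ef0 +
  fixes P :: "'w measure" and X :: "nat \<Rightarrow> 'w \<Rightarrow> _"
  assumes P_prob: "prob_space P"
    and X_indep: "prob_space.indep_vars P (\<lambda>_. \<nu>) X UNIV"
    and X_distr: "\<And>i. distr P \<nu> (X i) = ef_distr \<nu> t \<theta>0"
begin

sublocale P: prob_space P by (rule P_prob)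

lemma Xm[measurable]: "X i \<in> measurable P \<nu>"
  using X_indep unfolding P.indep_vars_def by auto

definition p0 where "p0 x = exp (t x \<bullet> \<theta>0) / Z \<theta>0" for x

lemma p0_pos: "0 < p0 x" unfolding p0_def using Z_pos[OF th0] by simp
lemma p0_meas[measurable]: "p0 \<in> borel_measurable \<nu>" unfolding p0_def by measurable

lemma distr_eq: "distr P \<nu> (X i) = density \<nu> (\<lambda>x. ennreal (p0 x))"
  unfolding X_distr ef_distr_def p0_def using dens_eq[OF th0] by simp

lemma transfer_int:
  fixes f :: "_ \<Rightarrow> 'v::{banach, second_countable_topology}"
  assumes [measurable]: "f \<in> borel_measurable \<nu>"
  shows "integrable P (\<lambda>\<omega>. f (X i \<omega>)) \<longleftrightarrow> integrable \<nu> (\<lambda>x. p0 x *\<^sub>R f x)"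
proof -
  have "integrable P (\<lambda>\<omega>. f (X i \<omega>)) \<longleftrightarrow> integrable (distr P \<nu> (X i)) f"
    by (rule integrable_distr_eq[symmetric]) auto
  also have "\<dots> \<longleftrightarrow> integrable \<nu> (\<lambda>x. p0 x *\<^sub>R f x)"
    unfolding distr_eq by (rule integrable_density) (auto intro: less_imp_le[OF p0_pos])
  finally show ?thesis .
qed

lemma transfer_integral:
  fixes f :: "_ \<Rightarrow> 'v::{banach, second_countable_topology}"
  assumes [measurable]: "f \<in> borel_measurable \<nu>"
  shows "(\<integral>\<omega>. f (X i \<omega>) \<partial>P) = (\<integral>x. p0 x *\<^sub>R f x \<partial>\<nu>)"
proof -
  have "(\<integral>\<omega>. f (X i \<omega>) \<partial>P) = integral\<^sup>L (distr P \<nu> (X i)) f"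
    by (rule integral_distr[symmetric]) auto
  also have "\<dots> = (\<integral>x. p0 x *\<^sub>R f x \<partial>\<nu>)"
    unfolding distr_eq by (rule integral_density) (auto intro: less_imp_le[OF p0_pos])
  finally show ?thesis .
qed

lemma p0_int: "integrable \<nu> p0" "(\<integral>x. p0 x \<partial>\<nu>) = 1"
proof -
  show "integrable \<nu> p0" unfolding p0_def using Q0_int by simp
  have "(\<integral>x. p0 x \<partial>\<nu>) = (\<integral>x. exp (t x \<bullet> \<theta>0) \<partial>\<nu>) / Z \<theta>0" unfolding p0_def by simp
  then show "(\<integral>x. p0 x \<partial>\<nu>) = 1" using Z_pos[OF th0] by (simp add: Z_def)
qed

lemma p0_t: "integrable \<nu> (\<lambda>x. p0 x *\<^sub>R t x)" "(\<integral>x. p0 x *\<^sub>R t x \<partial>\<nu>) = mu \<theta>0"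
proof -
  have e: "(\<lambda>x. p0 x *\<^sub>R t x) = (\<lambda>x. (1 / Z \<theta>0) *\<^sub>R (exp (t x \<bullet> \<theta>0) *\<^sub>R t x))"
    unfolding p0_def by (simp add: fun_eq_iff)
  show "integrable \<nu> (\<lambda>x. p0 x *\<^sub>R t x)" unfolding e by (rule integrable_scaleR_right[OF int_Nt(3)[OF th0]])
  show "(\<integral>x. p0 x *\<^sub>R t x \<partial>\<nu>) = mu \<theta>0"
    unfolding mean_param_def using dens_eq[OF th0] unfolding p0_def by simp
qed

lemma p0_sq: "integrable \<nu> (\<lambda>x. p0 x * (norm (t x - mu \<theta>0))^2)"
proof (rule Bochner_Integration.integrable_bound)
  show "integrable \<nu> (\<lambda>x. (2 / Z \<theta>0) * (exp (t x \<bullet> \<theta>0) * (norm (t x))^2) + (2 * (norm (mu \<theta>0))^2) * p0 x)"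
    using int_Nt(2)[OF th0] p0_int(1) by (intro Bochner_Integration.integrable_add integrable_mult_right) auto
  show "AE x in \<nu>. norm (p0 x * (norm (t x - mu \<theta>0))^2) \<le> norm ((2 / Z \<theta>0) * (exp (t x \<bullet> \<theta>0) * (norm (t x))^2) + (2 * (norm (mu \<theta>0))^2) * p0 x)"
  proof (intro AE_I2)
    fix x
    have "(norm (t x - mu \<theta>0))^2 \<le> (norm (t x) + norm (mu \<theta>0))^2"
      by (intro power_mono norm_triangle_ineq4) auto
    also have "\<dots> \<le> 2 * (norm (t x))^2 + 2 * (norm (mu \<theta>0))^2"
      using sum_squares_bound[of "norm (t x)" "norm (mu \<theta>0)"] by (simp add: power2_eq_square algebra_simps)
    finally have b: "(norm (t x - mu \<theta>0))^2 \<le> 2 * (norm (t x))^2 + 2 * (norm (mu \<theta>0))^2" .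
    have "p0 x * (norm (t x - mu \<theta>0))^2 \<le> p0 x * (2 * (norm (t x))^2 + 2 * (norm (mu \<theta>0))^2)"
      using b p0_pos[of x] by (intro mult_left_mono) auto
    also have "\<dots> = (2 / Z \<theta>0) * (exp (t x \<bullet> \<theta>0) * (norm (t x))^2) + (2 * (norm (mu \<theta>0))^2) * p0 x"
      unfolding p0_def by (simp add: algebra_simps)
    finally show "norm (p0 x * (norm (t x - mu \<theta>0))^2) \<le> norm ((2 / Z \<theta>0) * (exp (t x \<bullet> \<theta>0) * (norm (t x))^2) + (2 * (norm (mu \<theta>0))^2) * p0 x)"
      using p0_pos[of x] Z_pos[OF th0] by (simp add: abs_of_nonneg less_imp_le)
  qed
qed simp

definition \<sigma>2 where "\<sigma>2 = (\<integral>x. p0 x * (norm (t x - mu \<theta>0))^2 \<partial>\<nu>)"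

definition Yb where "Yb i b \<omega> = (t (X i \<omega>) - mu \<theta>0) \<bullet> b" for i b \<omega>

lemma Yb_meas[measurable]: "Yb i b \<in> borel_measurable P" unfolding Yb_def by measurable

lemma Yb_int: "integrable P (Yb i b)" "(\<integral>\<omega>. Yb i b \<omega> \<partial>P) = 0"
proof -
  have ib: "integrable \<nu> (\<lambda>x. (p0 x *\<^sub>R t x) \<bullet> b - (mu \<theta>0 \<bullet> b) * p0 x)"
    using p0_t(1) p0_int(1) by (intro Bochner_Integration.integrable_diff integrable_mult_right integrable_inner_left) auto
  have e: "(\<lambda>x. p0 x *\<^sub>R ((t x - mu \<theta>0) \<bullet> b)) = (\<lambda>x. (p0 x *\<^sub>R t x) \<bullet> b - (mu \<theta>0 \<bullet> b) * p0 x)"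
    by (simp add: fun_eq_iff algebra_simps inner_diff_left)
  have fm: "(\<lambda>x. (t x - mu \<theta>0) \<bullet> b) \<in> borel_measurable \<nu>" by measurable
  have "integrable \<nu> (\<lambda>x. p0 x *\<^sub>R ((t x - mu \<theta>0) \<bullet> b))" unfolding e by (rule ib)
  then have "integrable P (\<lambda>\<omega>. (\<lambda>x. (t x - mu \<theta>0) \<bullet> b) (X i \<omega>))"
    by (rule transfer_int[OF fm, THEN iffD2])
  then show "integrable P (Yb i b)" unfolding Yb_def by simp
  have "(\<integral>\<omega>. Yb i b \<omega> \<partial>P) = (\<integral>x. p0 x *\<^sub>R ((t x - mu \<theta>0) \<bullet> b) \<partial>\<nu>)"
    unfolding Yb_def by (rule transfer_integral[OF fm])
  also have "\<dots> = (\<integral>x. (p0 x *\<^sub>R t x) \<bullet> b \<partial>\<nu>) - (mu \<theta>0 \<bullet> b) * (\<integral>x. p0 x \<partial>\<nu>)"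
  proof -
    have i1: "integrable \<nu> (\<lambda>x. (p0 x *\<^sub>R t x) \<bullet> b)" using p0_t(1) by (rule integrable_inner_left)
    have i2: "integrable \<nu> (\<lambda>x. (mu \<theta>0 \<bullet> b) * p0 x)" using p0_int(1) by (rule integrable_mult_right)
    show ?thesis unfolding e Bochner_Integration.integral_diff[OF i1 i2] by simp
  qed
  also have "(\<integral>x. (p0 x *\<^sub>R t x) \<bullet> b \<partial>\<nu>) = (\<integral>x. p0 x *\<^sub>R t x \<partial>\<nu>) \<bullet> b"
    by (rule integral_inner_left) (use p0_t(1) in auto)
  finally show "(\<integral>\<omega>. Yb i b \<omega> \<partial>P) = 0" using p0_t(2) p0_int(2) by simp
qed

lemma Ysq: "integrable P (\<lambda>\<omega>. (norm (t (X i \<omega>) - mu \<theta>0))^2)"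
    "(\<integral>\<omega>. (norm (t (X i \<omega>) - mu \<theta>0))^2 \<partial>P) = \<sigma>2"
proof -
  show "integrable P (\<lambda>\<omega>. (norm (t (X i \<omega>) - mu \<theta>0))^2)"
    using transfer_int[of "\<lambda>x. (norm (t x - mu \<theta>0))^2" i] p0_sq by simp
  show "(\<integral>\<omega>. (norm (t (X i \<omega>) - mu \<theta>0))^2 \<partial>P) = \<sigma>2"
    using transfer_integral[of "\<lambda>x. (norm (t x - mu \<theta>0))^2" i] unfolding \<sigma>2_def by simp
qed

lemma Yb_sq_int: assumes b: "b \<in> Basis" shows "integrable P (\<lambda>\<omega>. Yb i b \<omega> * Yb i b \<omega>)"
proof (rule Bochner_Integration.integrable_bound[OF Ysq(1)])
  show "AE \<omega> in P. norm (Yb i b \<omega> * Yb i b \<omega>) \<le> norm ((norm (t (X i \<omega>) - mu \<theta>0))^2)"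
  proof (intro AE_I2)
    fix \<omega>
    have "\<bar>Yb i b \<omega>\<bar> \<le> norm (t (X i \<omega>) - mu \<theta>0)" unfolding Yb_def by (rule Basis_le_norm[OF b])
    then have "\<bar>Yb i b \<omega>\<bar> * \<bar>Yb i b \<omega>\<bar> \<le> norm (t (X i \<omega>) - mu \<theta>0) * norm (t (X i \<omega>) - mu \<theta>0)"
      by (intro mult_mono) auto
    then show "norm (Yb i b \<omega> * Yb i b \<omega>) \<le> norm ((norm (t (X i \<omega>) - mu \<theta>0))^2)"
      by (simp add: abs_mult power2_eq_square)
  qed
qed simp

lemma indep_ij: assumes "i \<noteq> j" shows "P.indep_var \<nu> (X i) \<nu> (X j)"
proof -
  have "P.indep_var \<nu> ((\<lambda>f. f i) \<circ> (\<lambda>\<omega>. restrict (\<lambda>i. X i \<omega>) {i})) \<nu> ((\<lambda>f. f j) \<circ> (\<lambda>\<omega>. restrict (\<lambda>i. X i \<omega>) {j}))"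
    using assms by (intro P.indep_var_compose[OF P.indep_var_restrict[OF X_indep]]) auto
  also have "((\<lambda>f. f i) \<circ> (\<lambda>\<omega>. restrict (\<lambda>i. X i \<omega>) {i})) = X i" by auto
  also have "((\<lambda>f. f j) \<circ> (\<lambda>\<omega>. restrict (\<lambda>i. X i \<omega>) {j})) = X j" by auto
  finally show ?thesis .
qed

lemma Yb_cross: assumes "i \<noteq> j"
  shows "integrable P (\<lambda>\<omega>. Yb i b \<omega> * Yb j b \<omega>)" "(\<integral>\<omega>. Yb i b \<omega> * Yb j b \<omega> \<partial>P) = 0"
proof -
  define g where "g x = (t x - mu \<theta>0) \<bullet> b" for x
  have gm: "g \<in> borel_measurable \<nu>" unfolding g_def by measurable
  have ind: "P.indep_var borel (g \<circ> X i) borel (g \<circ> X j)"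
    by (rule P.indep_var_compose[OF indep_ij[OF assms] gm gm])
  have e: "g \<circ> X k = Yb k b" for k unfolding g_def Yb_def by auto
  show "integrable P (\<lambda>\<omega>. Yb i b \<omega> * Yb j b \<omega>)"
    using P.indep_var_integrable[OF ind] Yb_int(1) unfolding e by auto
  show "(\<integral>\<omega>. Yb i b \<omega> * Yb j b \<omega> \<partial>P) = 0"
    using P.indep_var_lebesgue_integral[OF ind] Yb_int unfolding e by auto
qed

definition Ss where "Ss n \<omega> = (\<Sum>i<n. (t (X i \<omega>) - mu \<theta>0))" for n \<omega>

lemma Ss_meas[measurable]: "Ss n \<in> borel_measurable P" unfolding Ss_def by measurable

lemma Ss_sq_expand: "(norm (Ss n \<omega>))^2 = (\<Sum>b\<in>Basis. \<Sum>i<n. \<Sum>j<n. Yb i b \<omega> * Yb j b \<omega>)"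
proof -
  have "(norm (Ss n \<omega>))^2 = Ss n \<omega> \<bullet> Ss n \<omega>" by (rule power2_norm_eq_inner)
  also have "\<dots> = (\<Sum>b\<in>Basis. (Ss n \<omega> \<bullet> b) * (Ss n \<omega> \<bullet> b))" by (rule euclidean_inner)
  also have "\<dots> = (\<Sum>b\<in>Basis. \<Sum>i<n. \<Sum>j<n. Yb i b \<omega> * Yb j b \<omega>)"
    unfolding Ss_def Yb_def by (simp add: inner_sum_left sum_product)
  finally show ?thesis .
qed

lemma Ss_sq: "integrable P (\<lambda>\<omega>. (norm (Ss n \<omega>))^2)" "(\<integral>\<omega>. (norm (Ss n \<omega>))^2 \<partial>P) = real n * \<sigma>2"
proof -
  have ip: "integrable P (\<lambda>\<omega>. Yb i b \<omega> * Yb j b \<omega>)" if "b \<in> Basis" for i j b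
    using Yb_cross(1)[of i j b] Yb_sq_int[OF that, of i] by (cases "i = j") auto
  have e: "(\<lambda>\<omega>. (norm (Ss n \<omega>))^2) = (\<lambda>\<omega>. \<Sum>b\<in>Basis. \<Sum>i<n. \<Sum>j<n. Yb i b \<omega> * Yb j b \<omega>)"
    using Ss_sq_expand by auto
  show "integrable P (\<lambda>\<omega>. (norm (Ss n \<omega>))^2)" unfolding e using ip
    by (intro Bochner_Integration.integrable_sum) auto
  have "(\<integral>\<omega>. (norm (Ss n \<omega>))^2 \<partial>P) = (\<Sum>b\<in>Basis. \<Sum>i<n. \<Sum>j<n. \<integral>\<omega>. Yb i b \<omega> * Yb j b \<omega> \<partial>P)"
    unfolding e using ip by (simp add: Bochner_Integration.integral_sum Bochner_Integration.integrable_sum)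
  also have "\<dots> = (\<Sum>b\<in>Basis. \<Sum>i<n. \<integral>\<omega>. Yb i b \<omega> * Yb i b \<omega> \<partial>P)"
  proof (intro sum.cong refl)
    fix b i assume "i \<in> {..<n}"
    then have "(\<Sum>j<n. \<integral>\<omega>. Yb i b \<omega> * Yb j b \<omega> \<partial>P) = (\<Sum>j\<in>{i}. \<integral>\<omega>. Yb i b \<omega> * Yb j b \<omega> \<partial>P)"
      using Yb_cross(2) by (intro sum.mono_neutral_right) auto
    then show "(\<Sum>j<n. \<integral>\<omega>. Yb i b \<omega> * Yb j b \<omega> \<partial>P) = (\<integral>\<omega>. Yb i b \<omega> * Yb i b \<omega> \<partial>P)" by simp
  qed
  also have "\<dots> = (\<Sum>i<n. \<Sum>b\<in>Basis. \<integral>\<omega>. Yb i b \<omega> * Yb i b \<omega> \<partial>P)" by (rule sum.swap)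
  also have "\<dots> = (\<Sum>i<n. \<integral>\<omega>. (norm (t (X i \<omega>) - mu \<theta>0))^2 \<partial>P)"
  proof (intro sum.cong refl)
    fix i
    have nsq: "(norm v)^2 = (\<Sum>b\<in>Basis. (v \<bullet> b) * (v \<bullet> b))" for v :: "'b \<times> 'c"
      unfolding power2_norm_eq_inner by (rule euclidean_inner)
    have "(\<lambda>\<omega>. (norm (t (X i \<omega>) - mu \<theta>0))^2) = (\<lambda>\<omega>. \<Sum>b\<in>Basis. Yb i b \<omega> * Yb i b \<omega>)"
      unfolding Yb_def by (rule ext) (rule nsq)
    then show "(\<Sum>b\<in>Basis. \<integral>\<omega>. Yb i b \<omega> * Yb i b \<omega> \<partial>P) = (\<integral>\<omega>. (norm (t (X i \<omega>) - mu \<theta>0))^2 \<partial>P)"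
      using ip by (simp add: Bochner_Integration.integral_sum)
  qed
  also have "\<dots> = real n * \<sigma>2" using Ysq(2) by simp
  finally show "(\<integral>\<omega>. (norm (Ss n \<omega>))^2 \<partial>P) = real n * \<sigma>2" .
qed

lemma sigma2_nonneg: "0 \<le> \<sigma>2"
  unfolding \<sigma>2_def using p0_pos by (intro integral_nonneg_AE AE_I2 mult_nonneg_nonneg) (auto intro: less_imp_le)

lemma avg_eq: "0 < n \<Longrightarrow> avg_stat t X n \<omega> - mu \<theta>0 = (1 / real n) *\<^sub>R Ss n \<omega>"
proof -
  assume n: "0 < n"
  have "(\<Sum>i<n. mu \<theta>0) = real n *\<^sub>R mu \<theta>0" by (simp add: sum_constant_scaleR)
  then have "(1 / real n) *\<^sub>R (\<Sum>i<n. mu \<theta>0) = mu \<theta>0" using n by simp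
  then show ?thesis unfolding avg_stat_def Ss_def by (simp add: sum_subtractf scaleR_diff_right)
qed

lemma prob_bound:
  assumes ep: "\<epsilon> > 0"
  shows "\<exists>C0>0. \<forall>n>0. \<exists>E\<in>sets P. measure P E < \<epsilon> \<and>
           (\<forall>\<omega>\<in>space P - E. norm (avg_stat t X n \<omega> - mu \<theta>0) \<le> C0 / sqrt (real n))"
proof -
  define C0 where "C0 = sqrt (2 * (\<sigma>2 + 1) / \<epsilon>)"
  have s1: "0 < \<sigma>2 + 1" using sigma2_nonneg by simp
  have C0p: "0 < C0" unfolding C0_def using s1 ep by simp
  have C0sq: "C0^2 = 2 * (\<sigma>2 + 1) / \<epsilon>" unfolding C0_def using s1 ep by simp
  have "\<forall>n>0. \<exists>E\<in>sets P. measure P E < \<epsilon> \<and>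
           (\<forall>\<omega>\<in>space P - E. norm (avg_stat t X n \<omega> - mu \<theta>0) \<le> C0 / sqrt (real n))"
  proof (intro allI impI)
    fix n :: nat assume n: "0 < n"
    define c where "c = C0^2 * real n"
    have cp: "0 < c" unfolding c_def using C0p n by simp
    define E where "E = {\<omega> \<in> space P. c \<le> (norm (Ss n \<omega>))^2}"
    have Es: "E \<in> sets P" unfolding E_def by measurable
    have "measure P E \<le> (\<integral>\<omega>. (norm (Ss n \<omega>))^2 \<partial>P) / c"
      unfolding E_def by (rule integral_Markov_inequality_measure[OF Ss_sq(1) Es]) (use cp in auto)
    also have "\<dots> = \<sigma>2 / C0^2" unfolding Ss_sq(2) c_def using n C0p by simp
    also have "\<dots> = \<sigma>2 * \<epsilon> / (2 * (\<sigma>2 + 1))" unfolding C0sq using s1 ep by simp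
    also have "\<dots> < \<epsilon>"
    proof -
      have e2: "2 * (\<sigma>2 + 1) = 2 * \<sigma>2 + 2" by simp
      have "\<sigma>2 < 2 * (\<sigma>2 + 1)" unfolding e2 using sigma2_nonneg by linarith
      then have "\<sigma>2 * \<epsilon> < 2 * (\<sigma>2 + 1) * \<epsilon>" using ep by (rule mult_strict_right_mono)
      then show ?thesis using s1 by (simp add: field_simps)
    qed
    finally have mE: "measure P E < \<epsilon>" .
    have "norm (avg_stat t X n \<omega> - mu \<theta>0) \<le> C0 / sqrt (real n)" if w: "\<omega> \<in> space P - E" for \<omega>
    proof -
      have "(norm (Ss n \<omega>))^2 < c" using w unfolding E_def by auto
      also have "c = (C0 * sqrt (real n))^2" unfolding c_def by (simp add: power_mult_distrib)
      finally have "norm (Ss n \<omega>) < C0 * sqrt (real n)"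
        using C0p by (simp add: power_less_imp_less_base)
      then have "norm (Ss n \<omega>) / real n < C0 * sqrt (real n) / real n" using n by (simp add: divide_strict_right_mono)
      also have "C0 * sqrt (real n) / real n = C0 / sqrt (real n)"
      proof -
        have sp: "0 < sqrt (real n)" using n by simp
        have nn: "real n = sqrt (real n) * sqrt (real n)" by simp
        have "C0 * sqrt (real n) / real n = C0 * sqrt (real n) / (sqrt (real n) * sqrt (real n))"
          by (subst nn) (rule refl)
        also have "\<dots> = C0 / sqrt (real n)" using sp by (simp add: divide_simps)
        finally show ?thesis .
      qed
      finally show ?thesis unfolding avg_eq[OF n] using n by simp
    qed
    then show "\<exists>E\<in>sets P. measure P E < \<epsilon> \<and> (\<forall>\<omega>\<in>space P - E. norm (avg_stat t X n \<omega> - mu \<theta>0) \<le> C0 / sqrt (real n))"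
      using Es mE by blast
  qed
  then show ?thesis using C0p by blast
qed

end

theorem lemmaA7:
  fixes \<nu> :: "'x measure"
    and t :: "'x \<Rightarrow> ('a::euclidean_space \<times> 'b::euclidean_space)"
    and P :: "'w measure"
    and X :: "nat \<Rightarrow> 'w \<Rightarrow> 'x"
    and Mu' :: "'a set" and Thv' :: "'b set"
    and \<theta>0 \<psi>0 :: "'a \<times> 'b"
    and \<theta>til \<theta>hat \<mu>chk :: "nat \<Rightarrow> 'w \<Rightarrow> 'a \<times> 'b"
  assumes t_meas: "t \<in> borel_measurable \<nu>"
    and minimal: "minimal_rep \<nu> t"
    and regular: "regular_ef \<nu> t"
    and Mu'_sub: "Mu' \<subseteq> fst ` mean_space \<nu> t"
    and Mu'_convex: "convex Mu'"
    and Mu'_closed: "closedin (top_of_set (fst ` mean_space \<nu> t)) Mu'"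
    and Thv'_sub: "Thv' \<subseteq> snd ` nat_param_space \<nu> t"
    and Thv'_convex: "convex Thv'"
    and Thv'_closed: "closedin (top_of_set (snd ` nat_param_space \<nu> t)) Thv'"
    and \<theta>0_in: "\<theta>0 \<in> nat_param_space \<nu> t"
    and \<psi>0_def: "\<psi>0 = mixed_param \<nu> t \<theta>0"
    and \<psi>0_in: "\<psi>0 \<in> Mu' \<times> Thv'"
    and P_prob: "prob_space P"
    and X_indep: "prob_space.indep_vars P (\<lambda>_. \<nu>) X UNIV"
    and X_distr: "\<And>i. distr P \<nu> (X i) = ef_distr \<nu> t \<theta>0"
    and MLE: "\<And>n \<omega>. (\<exists>\<theta>. is_arg_max (likelihood \<nu> t X n \<omega>)
                    (\<lambda>\<theta>. \<theta> \<in> nat_param_space \<nu> t \<and> mixed_param \<nu> t \<theta> \<in> Mu' \<times> Thv') \<theta>)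
          \<Longrightarrow> is_arg_max (likelihood \<nu> t X n \<omega>)
                (\<lambda>\<theta>. \<theta> \<in> nat_param_space \<nu> t \<and> mixed_param \<nu> t \<theta> \<in> Mu' \<times> Thv') (\<theta>til n \<omega>)"
    and dual1: "\<And>n \<omega>. (\<exists>\<theta>. is_arg_min (KL_div \<nu> t (avg_stat t X n \<omega>)) (\<lambda>\<theta>. snd \<theta> \<in> Thv') \<theta>)
          \<Longrightarrow> is_arg_min (KL_div \<nu> t (avg_stat t X n \<omega>)) (\<lambda>\<theta>. snd \<theta> \<in> Thv') (\<theta>hat n \<omega>)"
    and dual2: "\<And>n \<omega>. (\<exists>\<mu>. is_arg_min (\<lambda>\<mu>. KL_div \<nu> t \<mu> (\<theta>hat n \<omega>))
                    (\<lambda>\<mu>. \<mu> \<in> mean_space \<nu> t \<and> fst \<mu> \<in> Mu') \<mu>)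
          \<Longrightarrow> is_arg_min (\<lambda>\<mu>. KL_div \<nu> t \<mu> (\<theta>hat n \<omega>))
                (\<lambda>\<mu>. \<mu> \<in> mean_space \<nu> t \<and> fst \<mu> \<in> Mu') (\<mu>chk n \<omega>)"
  shows "bounded_in_prob P (\<lambda>n \<omega>. sqrt (real n) *\<^sub>R
            ((fst (avg_stat t X n \<omega>), snd (canon_of_mean \<nu> t (avg_stat t X n \<omega>))) - \<psi>0))
       \<and> bounded_in_prob P (\<lambda>n \<omega>. sqrt (real n) *\<^sub>R (mixed_param \<nu> t (\<theta>til n \<omega>) - \<psi>0))
       \<and> bounded_in_prob P (\<lambda>n \<omega>. sqrt (real n) *\<^sub>R
            ((fst (\<mu>chk n \<omega>), snd (canon_of_mean \<nu> t (\<mu>chk n \<omega>))) - \<psi>0))"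
proof -
  have efI: "ef \<nu> t" by (rule ef.intro[OF t_meas minimal regular])
  have ef0I: "ef0 \<nu> t \<theta>0" by (rule ef0.intro[OF efI]) (rule ef0_axioms.intro[OF \<theta>0_in])
  have psi0: "mixed_param \<nu> t \<theta>0 \<in> Mu' \<times> Thv'" using \<psi>0_in unfolding \<psi>0_def .
  have ef1I: "ef1 \<nu> t \<theta>0 Mu' Thv'"
    by (rule ef1.intro[OF ef0I]) (rule ef1_axioms.intro[OF Mu'_closed Thv'_closed psi0])
  interpret ef1 \<nu> t \<theta>0 Mu' Thv' by (rule ef1I)
  have efPI: "efP \<nu> t \<theta>0 P X"
    by (rule efP.intro[OF ef0I]) (rule efP_axioms.intro[OF P_prob X_indep X_distr])
  interpret efP \<nu> t \<theta>0 P X by (rule efPI)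
  have nsc: "norm (sqrt (real n) *\<^sub>R w) = sqrt (real n) * norm w" for n :: nat and w :: "'a \<times> 'b"
    by simp
  have cDp: "0 < cD" by (rule cD_pos)
  show ?thesis
  proof (intro conjI)
    show "bounded_in_prob P (\<lambda>n \<omega>. sqrt (real n) *\<^sub>R
            ((fst (avg_stat t X n \<omega>), snd (canon_of_mean \<nu> t (avg_stat t X n \<omega>))) - \<psi>0))"
    proof (rule bip_from[where K = "1 + 1 / cD" and dz = \<delta>0 and S = "\<lambda>n \<omega>. avg_stat t X n \<omega> - mu \<theta>0"])
      show "0 \<le> 1 + 1 / cD" using cDp by simp
      show "0 < \<delta>0" by (rule \<delta>0(1))
      fix \<epsilon> :: real assume "0 < \<epsilon>"
      then show "\<exists>C0>0. \<forall>n>0. \<exists>E\<in>sets P. measure P E < \<epsilon> \<and>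
                 (\<forall>\<omega>\<in>space P - E. norm (avg_stat t X n \<omega> - mu \<theta>0) \<le> C0 / sqrt (real n))"
        by (rule prob_bound)
    next
      fix n \<omega> assume n: "0 < n" and w: "\<omega> \<in> space P" and d: "norm (avg_stat t X n \<omega> - mu \<theta>0) \<le> \<delta>0"
      have "norm (sqrt (real n) *\<^sub>R ((fst (avg_stat t X n \<omega>), snd (canon_of_mean \<nu> t (avg_stat t X n \<omega>))) - \<psi>0))
          = sqrt (real n) * norm ((fst (avg_stat t X n \<omega>), snd (canon_of_mean \<nu> t (avg_stat t X n \<omega>))) - \<psi>0)"
        by (rule nsc)
      also have "\<dots> \<le> sqrt (real n) * ((1 + 1 / cD) * norm (avg_stat t X n \<omega> - mu \<theta>0))"
        using det1[OF d] \<psi>0_def by (intro mult_left_mono) auto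
      finally show "norm (sqrt (real n) *\<^sub>R ((fst (avg_stat t X n \<omega>), snd (canon_of_mean \<nu> t (avg_stat t X n \<omega>))) - \<psi>0))
          \<le> sqrt (real n) * (1 + 1 / cD) * norm (avg_stat t X n \<omega> - mu \<theta>0)" by (simp only: mult.assoc)
    qed
    show "bounded_in_prob P (\<lambda>n \<omega>. sqrt (real n) *\<^sub>R (mixed_param \<nu> t (\<theta>til n \<omega>) - \<psi>0))"
    proof (rule bip_from[where K = "(L0 + 1) / cD" and dz = \<delta>0 and S = "\<lambda>n \<omega>. avg_stat t X n \<omega> - mu \<theta>0"])
      show "0 \<le> (L0 + 1) / cD" using cDp L0_nonneg by simp
      show "0 < \<delta>0" by (rule \<delta>0(1))
      fix \<epsilon> :: real assume "0 < \<epsilon>"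
      then show "\<exists>C0>0. \<forall>n>0. \<exists>E\<in>sets P. measure P E < \<epsilon> \<and>
                 (\<forall>\<omega>\<in>space P - E. norm (avg_stat t X n \<omega> - mu \<theta>0) \<le> C0 / sqrt (real n))"
        by (rule prob_bound)
    next
      fix n \<omega> assume n: "0 < n" and w: "\<omega> \<in> space P" and d: "norm (avg_stat t X n \<omega> - mu \<theta>0) \<le> \<delta>0"
      have Lk: "likelihood \<nu> t X n \<omega> \<theta> = exp (real n * (avg_stat t X n \<omega> \<bullet> \<theta> - A \<theta>))" if "\<theta> \<in> Th" for \<theta>
        using lik_eq[OF that n] .
      have b: "norm (mixed_param \<nu> t (\<theta>til n \<omega>) - mixed_param \<nu> t \<theta>0) \<le> (L0 + 1) / cD * norm (avg_stat t X n \<omega> - mu \<theta>0)"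
        by (rule det2[OF n d Lk MLE])
      have "norm (sqrt (real n) *\<^sub>R (mixed_param \<nu> t (\<theta>til n \<omega>) - \<psi>0))
          = sqrt (real n) * norm (mixed_param \<nu> t (\<theta>til n \<omega>) - \<psi>0)" by (rule nsc)
      also have "\<dots> \<le> sqrt (real n) * ((L0 + 1) / cD * norm (avg_stat t X n \<omega> - mu \<theta>0))"
        using b unfolding \<psi>0_def by (intro mult_left_mono) simp_all
      finally show "norm (sqrt (real n) *\<^sub>R (mixed_param \<nu> t (\<theta>til n \<omega>) - \<psi>0))
          \<le> sqrt (real n) * ((L0 + 1) / cD) * norm (avg_stat t X n \<omega> - mu \<theta>0)" by (simp only: mult.assoc)
    qed
    show "bounded_in_prob P (\<lambda>n \<omega>. sqrt (real n) *\<^sub>R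
            ((fst (\<mu>chk n \<omega>), snd (canon_of_mean \<nu> t (\<mu>chk n \<omega>))) - \<psi>0))"
    proof (rule bip_from[where K = "(2 * C2 + L0) * (1 + 1 / cD) / cD" and dz = \<delta>0 and S = "\<lambda>n \<omega>. avg_stat t X n \<omega> - mu \<theta>0"])
      show "0 \<le> (2 * C2 + L0) * (1 + 1 / cD) / cD" using cDp L0_nonneg C2_pos by simp
      show "0 < \<delta>0" by (rule \<delta>0(1))
      fix \<epsilon> :: real assume "0 < \<epsilon>"
      then show "\<exists>C0>0. \<forall>n>0. \<exists>E\<in>sets P. measure P E < \<epsilon> \<and>
                 (\<forall>\<omega>\<in>space P - E. norm (avg_stat t X n \<omega> - mu \<theta>0) \<le> C0 / sqrt (real n))"
        by (rule prob_bound)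
    next
      fix n \<omega> assume n: "0 < n" and w: "\<omega> \<in> space P" and d: "norm (avg_stat t X n \<omega> - mu \<theta>0) \<le> \<delta>0"
      have b3: "norm ((fst (\<mu>chk n \<omega>), snd (canon_of_mean \<nu> t (\<mu>chk n \<omega>))) - mixed_param \<nu> t \<theta>0)
           \<le> (2 * C2 + L0) * (1 + 1 / cD) / cD * norm (avg_stat t X n \<omega> - mu \<theta>0)"
        by (rule det3[OF d dual1 dual2])
      have "norm (sqrt (real n) *\<^sub>R ((fst (\<mu>chk n \<omega>), snd (canon_of_mean \<nu> t (\<mu>chk n \<omega>))) - \<psi>0))
          = sqrt (real n) * norm ((fst (\<mu>chk n \<omega>), snd (canon_of_mean \<nu> t (\<mu>chk n \<omega>))) - \<psi>0)" by (rule nsc)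
      also have "\<dots> \<le> sqrt (real n) * ((2 * C2 + L0) * (1 + 1 / cD) / cD * norm (avg_stat t X n \<omega> - mu \<theta>0))"
        using b3 unfolding \<psi>0_def by (intro mult_left_mono) simp_all
      finally show "norm (sqrt (real n) *\<^sub>R ((fst (\<mu>chk n \<omega>), snd (canon_of_mean \<nu> t (\<mu>chk n \<omega>))) - \<psi>0))
          \<le> sqrt (real n) * ((2 * C2 + L0) * (1 + 1 / cD) / cD) * norm (avg_stat t X n \<omega> - mu \<theta>0)" by (simp only: mult.assoc)
    qed
  qed
qed

end
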